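(* Let $(\mathcal{A},\varphi)$ be a non-commutative space and let $(\mathcal{A}_{1,\ell},\mathcal{A}_{1,r})$ and $(\mathcal{A}_{2,\ell},\mathcal{A}_{2,r})$ be pairs of subalgebras of $\mathcal{A}$ which are bi-monotonically independent (in the order $1<2$) with respect to $\varphi$. Let $n\ge 1$, $\chi:\{1,\dots,n\}\to\{\ell,r\}$, $\omega:\{1,\dots,n\}\to\{1,2\}$, and $a_1,\dots,a_n\in\mathcal{A}$ with $a_j\in\mathcal{A}_{\omega(j),\chi(j)}$ for all $j$. Then \[ \varphi(a_1\cdots a_n)=\varphi(a_W)\prod_{\substack{V\in\pi_{\chi,\omega}\\ \omega(V)=2}}\varphi(a_V), \qquad W=\{j\in\{1,\dots,n\}:\omega(j)=1\}. \]
   Context: A non-commutative space $(\mathcal{A},\varphi)$ is a complex algebra $\mathcal{A}$ with a linear functional $\varphi$, with $\varphi(1)=1$ if $\mathcal{A}$ is unital. For algebras $\mathcal{C}_k$, $\sqcup_k\mathcal{C}_k$ denotes the free product without identification of units, $*_k\mathcal{C}_k$ denotes the free product of unital algebras with identification of units, and $\widetilde{\mathcal{C}}=\mathbb{C}1\oplus\mathcal{C}$ denotes the unitization; one has $\widetilde{\mathcal{C}_1}*\widetilde{\mathcal{C}_2}\cong\widetilde{\mathcal{C}_1\sqcup\mathcal{C}_2}$. Notation. For $n\ge1$ and $\chi:\{1,\dots,n\}\to\{\ell,r\}$ with $\chi^{-1}(\{\ell\})=\{i_1<\dots<i_p\}$ and $\chi^{-1}(\{r\})=\{i_{p+1}>\dots>i_n\}$,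 let $\prec_\chi$ be the total order $i_1\prec_\chi i_2\prec_\chi\cdots\prec_\chi i_n$ on $\{1,\dots,n\}$. A $\chi$-interval is a subset of $\{1,\dots,n\}$ which is an interval for $\prec_\chi$. For $V=\{v_1<\dots<v_s\}\subseteq\{1,\dots,n\}$ write $a_V=a_{v_1}\cdots a_{v_s}$ (product in increasing index order) and $(a_1,\dots,a_n)|_V=(a_{v_1},\dots,a_{v_s})$; by convention a functional applied to the empty product equals $1$. For $\omega:\{1,\dots,n\}\to K$, $\pi_{\chi,\omega}$ is the unique partition of $\{1,\dots,n\}$ into blocks $V_1,\dots,V_m$ such that each $V_k$ is a $\chi$-interval, $\max_{\prec_\chi}V_k\prec_\chi\min_{\prec_\chi}V_{k+1}$, $\omega$ is constant on each $V_k$ (value $\omega(V_k)$), and $\omega(V_k)\ne\omega(V_{k+1})$ for $1\le k\le m-1$. c-bi-free product. Given pairs of unital algebras $(\mathcal{B}_{k,\ell},\mathcal{B}_{k,r})_{k\in K}$ and unital linear functionals $\varphi_k,\psi_k$ on $\mathcal{B}_{k,\ell}*\mathcal{B}_{k,r}$, their c-bi-free product $(\varphi,\psi)=*\!*_k(\varphi_k,\psi_k)$ is the unique pair of unital linear functionals on $*_k(\mathcal{B}_{k,\ell}*\mathcal{B}_{k,r})$ restricting to $\varphi_k,\psi_k$ on each $\mathcal{B}_{k,\ell}*\mathcal{B}_{k,r}$ and such that whenever $n\ge1$, $\chi:\{1,\dots,n\}\to\{\ell,r\}$, $\omega:\{1,\dots,n\}\to K$, $b_j\in\mathcal{B}_{\omega(j),\chi(j)}$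 and $\psi(b_V)=0$ for all $V\in\pi_{\chi,\omega}$, then $\psi(b_1\cdots b_n)=0$ and $\varphi(b_1\cdots b_n)=\prod_{V\in\pi_{\chi,\omega}}\varphi(b_V)$. Bi-monotonic product. Let $(\mathcal{A}_{k,\ell},\mathcal{A}_{k,r})$, $k=1,2$, be pairs of algebras with linear functionals $\varphi_k$ on $\mathcal{A}_{k,\ell}\sqcup\mathcal{A}_{k,r}$. Let $\widetilde{\varphi_k}$ be the unital extension of $\varphi_k$ to $\widetilde{\mathcal{A}_{k,\ell}}*\widetilde{\mathcal{A}_{k,r}}\cong\widetilde{\mathcal{A}_{k,\ell}\sqcup\mathcal{A}_{k,r}}$, and $\delta_1$ the unital functional on $\widetilde{\mathcal{A}_{1,\ell}\sqcup\mathcal{A}_{1,r}}$ vanishing on $\mathcal{A}_{1,\ell}\sqcup\mathcal{A}_{1,r}$. Let $(\widetilde\varphi,\widetilde\psi)$ be the c-bi-free product of $(\widetilde{\varphi_1},\delta_1)$ and $(\widetilde{\varphi_2},\widetilde{\varphi_2})$ for the pairs $(\widetilde{\mathcal{A}_{k,\ell}},\widetilde{\mathcal{A}_{k,r}})$, $k=1,2$. The bi-monotonic product $\varphi_1\rhd\!\!\rhd\varphi_2$ is the restriction of $\widetilde\varphi$ to $(\mathcal{A}_{1,\ell}\sqcup\mathcal{A}_{1,r})\sqcup(\mathcal{A}_{2,\ell}\sqcup\mathcal{A}_{2,r})$. Bi-monotonic independence of two pairs. Pairs of subalgebras $(\mathcal{A}_{1,\ell},\mathcal{A}_{1,r}),(\mathcal{A}_{2,\ell},\mathcal{A}_{2,r})$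 of $(\mathcal{A},\varphi)$ are bi-monotonically independent (in the order $1<2$) if $\varphi\circ\iota=\varphi_1\rhd\!\!\rhd\varphi_2$, where $\iota:(\mathcal{A}_{1,\ell}\sqcup\mathcal{A}_{1,r})\sqcup(\mathcal{A}_{2,\ell}\sqcup\mathcal{A}_{2,r})\to\mathcal{A}$ is the homomorphism induced by the inclusions and $\varphi_k=\varphi\circ\iota|_{\mathcal{A}_{k,\ell}\sqcup\mathcal{A}_{k,r}}$. *)

theory Defs
  imports Main "HOL-Library.Complex_Order" Complex_Main
begin

definition calg :: "(complex \<Rightarrow> 'a::ring \<Rightarrow> 'a) \<Rightarrow> bool" where
  "calg smul \<longleftrightarrow> (\<forall>x. smul 1 x = x) \<and>
     (\<forall>c d x y. smul (c * d) x = smul c (smul d x) \<and> smul (c + d) x = smul c x + smul d x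
       \<and> smul c (x + y) = smul c x + smul c y
       \<and> smul c (x * y) = smul c x * y \<and> smul c (x * y) = x * smul c y)"

definition nc_space :: "(complex \<Rightarrow> 'a::ring \<Rightarrow> 'a) \<Rightarrow> ('a \<Rightarrow> complex) \<Rightarrow> bool" where
  "nc_space smul \<phi> \<longleftrightarrow> calg smul \<and> (\<forall>x y. \<phi> (x + y) = \<phi> x + \<phi> y)
     \<and> (\<forall>c x. \<phi> (smul c x) = c * \<phi> x)
     \<and> (\<forall>e. (\<forall>x. e * x = x \<and> x * e = x) \<longrightarrow> \<phi> e = 1)"

definition subalgebra :: "(complex \<Rightarrow> 'a::ring \<Rightarrow> 'a) \<Rightarrow> 'a set \<Rightarrow> bool" where
  "subalgebra smul S \<longleftrightarrow> 0 \<in> S \<and>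
     (\<forall>x\<in>S. \<forall>y\<in>S. x + y \<in> S \<and> x * y \<in> S \<and> (\<forall>c. smul c x \<in> S))"

fun listprod :: "'a::ring list \<Rightarrow> 'a" where
  "listprod [] = 0"
| "listprod [x] = x"
| "listprod (x # y # xs) = x * listprod (y # xs)"

definition aprod :: "(nat \<Rightarrow> 'a::ring) \<Rightarrow> nat set \<Rightarrow> 'a" where
  "aprod a V = listprod (map a (sorted_list_of_set V))"

definition phiprod :: "('a::ring \<Rightarrow> complex) \<Rightarrow> (nat \<Rightarrow> 'a) \<Rightarrow> nat set \<Rightarrow> complex" where
  "phiprod \<phi> a V = (if V = {} then 1 else \<phi> (aprod a V))"

datatype side = Lft | Rgt

definition chi_order :: "(nat \<Rightarrow> side) \<Rightarrow> nat \<Rightarrow> nat list" where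
  "chi_order \<chi> n = filter (\<lambda>i. \<chi> i = Lft) [1..<Suc n] @ rev (filter (\<lambda>i. \<chi> i = Rgt) [1..<Suc n])"

fun runs :: "('b \<Rightarrow> 'c) \<Rightarrow> 'b list \<Rightarrow> 'b list list" where
  "runs f [] = []"
| "runs f (x # xs) = (case runs f xs of
       [] \<Rightarrow> [[x]]
     | g # gs \<Rightarrow> (if f (hd g) = f x then (x # g) # gs else [x] # g # gs))"

text \<open>pi_{chi,omega}: the blocks are the maximal \<prec>_chi-intervals on which omega is constant.\<close>
definition pi_co :: "(nat \<Rightarrow> side) \<Rightarrow> (nat \<Rightarrow> 'k) \<Rightarrow> nat \<Rightarrow> nat set set" where
  "pi_co \<chi> \<omega> n = set (map set (runs \<omega> (chi_order \<chi> n)))"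

text \<open>Elements of the unitization C~ = C1 + A_{k,s} are pairs (lambda, a).
A letter (k, s, (lambda, a)) stands for the element lambda 1 + a of the unitization of
A_{k,s}, viewed in the free product (with identification of units) of all these
unitized algebras.  A word (list of letters) stands for the product of its letters.\<close>
type_synonym 'a letter = "nat \<times> side \<times> (complex \<times> 'a)"

definition umul :: "(complex \<Rightarrow> 'a::ring \<Rightarrow> 'a) \<Rightarrow> complex \<times> 'a \<Rightarrow> complex \<times> 'a \<Rightarrow> complex \<times> 'a" where
  "umul smul x y = (fst x * fst y, smul (fst x) (snd y) + smul (fst y) (snd x) + snd x * snd y)"

definition uadd :: "complex \<times> 'a::ring \<Rightarrow> complex \<times> 'a \<Rightarrow> complex \<times> 'a" where
  "uadd x y = (fst x + fst y, snd x + snd y)"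

definition usmul :: "(complex \<Rightarrow> 'a::ring \<Rightarrow> 'a) \<Rightarrow> complex \<Rightarrow> complex \<times> 'a \<Rightarrow> complex \<times> 'a" where
  "usmul smul c x = (c * fst x, smul c (snd x))"

definition valid_letter :: "nat set \<Rightarrow> (nat \<Rightarrow> side \<Rightarrow> 'a set) \<Rightarrow> 'a letter \<Rightarrow> bool" where
  "valid_letter K A l \<longleftrightarrow> fst l \<in> K \<and> snd (snd (snd l)) \<in> A (fst l) (fst (snd l))"

definition valid_word :: "nat set \<Rightarrow> (nat \<Rightarrow> side \<Rightarrow> 'a set) \<Rightarrow> 'a letter list \<Rightarrow> bool" where
  "valid_word K A w \<longleftrightarrow> (\<forall>l\<in>set w. valid_letter K A l)"

text \<open>A word with no unit component: it stands for an element of the non-unital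
free product of the algebras A_{k,s}.\<close>
definition nonunit_word :: "'a letter list \<Rightarrow> bool" where
  "nonunit_word w \<longleftrightarrow> (\<forall>l\<in>set w. fst (snd (snd l)) = 0)"

text \<open>Unital linear functionals F on the free product (with identification of units)
of the unitized algebras A~_{k,s}, k in K, s in {l, r}, described by their values on words:
the free product is the free algebra on the letters modulo linearity in each letter,
multiplication of adjacent letters from the same algebra and the unit relations, so linear
functionals on it are exactly the functions on words respecting these relations.\<close>
definition wfun :: "nat set \<Rightarrow> (nat \<Rightarrow> side \<Rightarrow> 'a set) \<Rightarrow> (complex \<Rightarrow> 'a::ring \<Rightarrow> 'a)
                    \<Rightarrow> ('a letter list \<Rightarrow> complex) \<Rightarrow> bool" where
  "wfun K A smul F \<longleftrightarrow> F [] = 1 \<and>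
     (\<forall>u v k s x y c. valid_word K A u \<and> valid_word K A v \<and> k \<in> K \<and> snd x \<in> A k s \<and> snd y \<in> A k s
        \<longrightarrow> F (u @ (k, s, umul smul x y) # v) = F (u @ (k, s, x) # (k, s, y) # v)
          \<and> F (u @ (k, s, uadd x y) # v) = F (u @ (k, s, x) # v) + F (u @ (k, s, y) # v)
          \<and> F (u @ (k, s, usmul smul c x) # v) = c * F (u @ (k, s, x) # v)
          \<and> F (u @ (k, s, (1, 0)) # v) = F (u @ v))"

definition chi_of :: "'a letter list \<Rightarrow> nat \<Rightarrow> side" where
  "chi_of w j = fst (snd (w ! (j - 1)))"

definition omega_of :: "'a letter list \<Rightarrow> nat \<Rightarrow> nat" where
  "omega_of w j = fst (w ! (j - 1))"

definition subword :: "'a letter list \<Rightarrow> nat set \<Rightarrow> 'a letter list" where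
  "subword w V = map (\<lambda>j. w ! (j - 1)) (sorted_list_of_set V)"

definition c_bifree :: "nat set \<Rightarrow> (nat \<Rightarrow> side \<Rightarrow> 'a set) \<Rightarrow> (complex \<Rightarrow> 'a::ring \<Rightarrow> 'a)
     \<Rightarrow> ('a letter list \<Rightarrow> complex) \<Rightarrow> ('a letter list \<Rightarrow> complex)
     \<Rightarrow> (nat \<Rightarrow> 'a letter list \<Rightarrow> complex) \<Rightarrow> (nat \<Rightarrow> 'a letter list \<Rightarrow> complex) \<Rightarrow> bool" where
  "c_bifree K A smul \<Phi> \<Psi> phis psis \<longleftrightarrow>
     wfun K A smul \<Phi> \<and> wfun K A smul \<Psi> \<and>
     (\<forall>k\<in>K. wfun {k} A smul (phis k) \<and> wfun {k} A smul (psis k)) \<and>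
     (\<forall>k\<in>K. \<forall>w. valid_word {k} A w \<longrightarrow> \<Phi> w = phis k w \<and> \<Psi> w = psis k w) \<and>
     (\<forall>w. w \<noteq> [] \<and> valid_word K A w \<and>
          (\<forall>V\<in>pi_co (chi_of w) (omega_of w) (length w). \<Psi> (subword w V) = 0)
        \<longrightarrow> \<Psi> w = 0 \<and>
            \<Phi> w = (\<Prod>V\<in>pi_co (chi_of w) (omega_of w) (length w). \<Phi> (subword w V)))"

definition phi_word :: "('a::ring \<Rightarrow> complex) \<Rightarrow> 'a letter list \<Rightarrow> complex" where
  "phi_word \<phi> w = \<phi> (listprod (map (\<lambda>l. snd (snd (snd l))) w))"

text \<open>Bi-monotonic independence of (A 1 Lft, A 1 Rgt), (A 2 Lft, A 2 Rgt) in the order 1 < 2: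
phi o iota equals the restriction of the first component of the c-bi-free product of
(phi1~, delta_1) and (phi2~, phi2~), where phik = phi o iota on A_{k,l} free A_{k,r}.
(The c-bi-free product and the unital extensions are unique, so existence is equivalent to
the paper's definition.)\<close>
definition bimonotone_indep :: "(complex \<Rightarrow> 'a::ring \<Rightarrow> 'a) \<Rightarrow> ('a \<Rightarrow> complex)
                                \<Rightarrow> (nat \<Rightarrow> side \<Rightarrow> 'a set) \<Rightarrow> bool" where
  "bimonotone_indep smul \<phi> A \<longleftrightarrow>
     (\<exists>\<Phi> \<Psi> \<Phi>1 \<Delta>1 \<Phi>2.
        wfun {1} A smul \<Phi>1 \<and> wfun {1} A smul \<Delta>1 \<and> wfun {2} A smul \<Phi>2 \<and>
        (\<forall>w. w \<noteq> [] \<and> valid_word {1} A w \<and> nonunit_word w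
             \<longrightarrow> \<Phi>1 w = phi_word \<phi> w \<and> \<Delta>1 w = 0) \<and>
        (\<forall>w. w \<noteq> [] \<and> valid_word {2} A w \<and> nonunit_word w \<longrightarrow> \<Phi>2 w = phi_word \<phi> w) \<and>
        c_bifree {1, 2} A smul \<Phi> \<Psi>
          (\<lambda>k. if k = 1 then \<Phi>1 else \<Phi>2) (\<lambda>k. if k = 1 then \<Delta>1 else \<Phi>2) \<and>
        (\<forall>w. w \<noteq> [] \<and> valid_word {1, 2} A w \<and> nonunit_word w \<longrightarrow> \<Phi> w = phi_word \<phi> w))"

end

theory Submission
  imports Defs
begin

lemma runs_Nil_iff: "runs f xs = [] \<longleftrightarrow> xs = []"
  by (cases xs) (auto split: list.split)

lemma hd_runs: "xs \<noteq> [] \<Longrightarrow> hd (hd (runs f xs)) = hd xs"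
  by (induction xs) (auto split: list.split)

lemma concat_runs: "concat (runs f xs) = xs"
  by (induction xs) (auto split: list.split)

lemma runs_nonempty: "[] \<notin> set (runs f xs)"
  by (induction xs) (auto split: list.split)

lemma runs_Cons_eq: "runs f (x # xs) = (if xs \<noteq> [] \<and> f (hd xs) = f x then (x # hd (runs f xs)) # tl (runs f xs) else [x] # runs f xs)"
proof (cases "xs = []")
  case True then show ?thesis by simp
next
  case False
  then obtain g gs where e: "runs f xs = g # gs" using runs_Nil_iff by (metis list.exhaust)
  have h: "hd g = hd xs" using hd_runs[of xs f] e False by simp
  have "runs f (x # xs) = (if f (hd g) = f x then (x # g) # gs else [x] # g # gs)"
    by (simp only: runs.simps(2) e list.case)
  then show ?thesis using e h False by (simp del: runs.simps)
qed

declare runs.simps(2)[simp del]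

lemma tl_subset: "set (tl xs) \<subseteq> set xs"
  by (cases xs) auto

lemma runs_const: "r \<in> set (runs f xs) \<Longrightarrow> y \<in> set r \<Longrightarrow> f y = f (hd r)"
proof (induction xs arbitrary: r)
  case Nil then show ?case by simp
next
  case (Cons x xs)
  show ?case
  proof (cases "xs \<noteq> [] \<and> f (hd xs) = f x")
    case True
    have hr: "hd (runs f xs) \<in> set (runs f xs)" using True runs_Nil_iff by (metis list.set_sel(1))
    have e: "runs f (x # xs) = (x # hd (runs f xs)) # tl (runs f xs)" using True by (simp add: runs_Cons_eq)
    show ?thesis
    proof (cases "r = x # hd (runs f xs)")
      case True2: True
      then show ?thesis using Cons.prems(2) Cons.IH[OF hr] True hd_runs[of xs f] by auto
    next
      case False
      then have "r \<in> set (runs f xs)" using Cons.prems(1) e tl_subset by fastforce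
      then show ?thesis using Cons by blast
    qed
  next
    case False
    then show ?thesis using Cons by (auto simp: runs_Cons_eq[of f x xs])
  qed
qed

lemma runs_cong: "(\<And>y. y \<in> set xs \<Longrightarrow> f y = g y) \<Longrightarrow> runs f xs = runs g xs"
proof (induction xs)
  case Nil then show ?case by simp
next
  case (Cons x xs)
  then have r: "runs f xs = runs g xs" by simp
  have fx: "f x = g x" using Cons.prems by simp
  show ?case
  proof (cases "xs = []")
    case True then show ?thesis by (simp add: runs_Cons_eq)
  next
    case False
    then have "f (hd xs) = g (hd xs)" using Cons.prems by simp
    then show ?thesis using r fx by (simp add: runs_Cons_eq)
  qed
qed

lemma concat_unique: "distinct (concat rs) \<Longrightarrow> r \<in> set rs \<Longrightarrow> r' \<in> set rs \<Longrightarrow> y \<in> set r \<Longrightarrow> y \<in> set r' \<Longrightarrow> r = r'"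
  by (induction rs) auto

lemma runs_unique: "distinct xs \<Longrightarrow> r \<in> set (runs f xs) \<Longrightarrow> r' \<in> set (runs f xs) \<Longrightarrow> y \<in> set r \<Longrightarrow> y \<in> set r' \<Longrightarrow> r = r'"
  using concat_unique[of "runs f xs" r r' y] concat_runs[of f xs] by simp

lemma runs_Cons_sub: "r \<in> set (runs f xs) \<Longrightarrow> \<exists>r'\<in>set (runs f (x#xs)). set r \<subseteq> set r'"
proof (cases "xs \<noteq> [] \<and> f (hd xs) = f x")
  case True
  assume r: "r \<in> set (runs f xs)"
  have e: "runs f (x # xs) = (x # hd (runs f xs)) # tl (runs f xs)" using True by (simp add: runs_Cons_eq)
  have ne: "runs f xs \<noteq> []" using True runs_Nil_iff by auto
  show ?thesis
  proof (cases "r = hd (runs f xs)")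
    case True then show ?thesis using e by auto
  next
    case False
    then have "r \<in> set (tl (runs f xs))" using r ne by (cases "runs f xs") auto
    then show ?thesis using e by auto
  qed
next
  case False
  assume r: "r \<in> set (runs f xs)"
  then show ?thesis using False by (auto simp: runs_Cons_eq)
qed

lemma runs_succ: "successively (\<lambda>x y. f x = f y \<longrightarrow> (\<exists>r\<in>set (runs f xs). x \<in> set r \<and> y \<in> set r)) xs"
proof (induction xs)
  case Nil then show ?case by simp
next
  case (Cons x xs)
  show ?case
  proof (cases "xs = []")
    case True then show ?thesis by simp
  next
    case False
    then obtain y ys where Cons2: "xs = y # ys" by (cases xs) auto
    have xne: "xs \<noteq> []" "hd xs = y" using Cons2 by auto
    have ne: "runs f xs \<noteq> []" using Cons2 runs_Nil_iff by auto
    have h: "hd (hd (runs f xs)) = y" using hd_runs[of xs f] Cons2 by simp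
    have hn: "hd (runs f xs) \<noteq> []" using ne runs_nonempty[of f xs] by (metis list.set_sel(1))
    have p1: "f x = f y \<longrightarrow> (\<exists>r\<in>set (runs f (x#xs)). x \<in> set r \<and> y \<in> set r)"
    proof
      assume "f x = f y"
      then have "runs f (x # xs) = (x # hd (runs f xs)) # tl (runs f xs)" using Cons2 by (simp add: runs_Cons_eq)
      moreover have "y \<in> set (hd (runs f xs))" using h hn by (metis list.set_sel(1))
      ultimately show "\<exists>r\<in>set (runs f (x#xs)). x \<in> set r \<and> y \<in> set r" by auto
    qed
    have p2: "successively (\<lambda>a b. f a = f b \<longrightarrow> (\<exists>r\<in>set (runs f (x#xs)). a \<in> set r \<and> b \<in> set r)) xs"
    proof (rule successively_mono[OF Cons.IH])
      fix a b
      assume "a \<in> set xs" "b \<in> set xs"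
      assume h: "f a = f b \<longrightarrow> (\<exists>r\<in>set (runs f xs). a \<in> set r \<and> b \<in> set r)"
      show "f a = f b \<longrightarrow> (\<exists>r\<in>set (runs f (x#xs)). a \<in> set r \<and> b \<in> set r)"
      proof
        assume "f a = f b"
        with h obtain r where r: "r \<in> set (runs f xs)" "a \<in> set r" "b \<in> set r" by blast
        from runs_Cons_sub[OF r(1), of x] obtain r' where "r' \<in> set (runs f (x#xs))" "set r \<subseteq> set r'" by blast
        then show "\<exists>r\<in>set (runs f (x#xs)). a \<in> set r \<and> b \<in> set r" using r by blast
      qed
    qed
    show ?thesis using p1 p2 Cons2 by simp
  qed
qed

lemma runs_hd_in: "r \<in> set (runs f xs) \<Longrightarrow> hd r \<in> set r"
  using runs_nonempty[of f xs] by (metis list.set_sel(1))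

lemma retag2:
  fixes \<tau> :: "'b \<Rightarrow> nat"
  assumes "\<forall>x\<in>set L. \<tau> x = 1 \<or> \<tau> x = 2" "\<forall>x\<in>U. \<tau> x = 2"
    "successively (\<lambda>x y. \<tau> x = \<tau> y \<longrightarrow> (x\<in>U \<longleftrightarrow> y\<in>U)) L"
  shows "filter (\<lambda>r. (\<lambda>x. if x \<in> U then 1 else \<tau> x) (hd r) = 2) (runs (\<lambda>x. if x \<in> U then 1 else \<tau> x) L)
       = filter (\<lambda>r. \<tau> (hd r) = 2 \<and> hd r \<notin> U) (runs \<tau> L)"
  using assms
proof (induction L)
  case Nil then show ?case by simp
next
  case (Cons x xs)
  define \<tau>' where "\<tau>' = (\<lambda>x. if x \<in> U then 1 else \<tau> x)"
  show ?case
  proof (cases "xs = []")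
    case True then show ?thesis using Cons.prems by (auto simp: runs_Cons_eq)
  next
    case False
    then obtain y ys where Cons2: "xs = y # ys" by (cases xs) auto
    have xne: "xs \<noteq> []" "hd xs = y" using Cons2 by auto
    have IH: "filter (\<lambda>r. \<tau>' (hd r) = 2) (runs \<tau>' xs) = filter (\<lambda>r. \<tau> (hd r) = 2 \<and> hd r \<notin> U) (runs \<tau> xs)"
    proof -
      have a1: "\<forall>x\<in>set xs. \<tau> x = 1 \<or> \<tau> x = 2" using Cons.prems(1) by simp
      have a3: "successively (\<lambda>x y. \<tau> x = \<tau> y \<longrightarrow> (x\<in>U \<longleftrightarrow> y\<in>U)) xs"
        using Cons.prems(3) Cons2 by simp
      show ?thesis using Cons.IH[OF a1 Cons.prems(2) a3] unfolding \<tau>'_def .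
    qed
    have "runs \<tau> xs \<noteq> []" using Cons2 by (simp add: runs_Nil_iff)
    then obtain g gs where R: "runs \<tau> xs = g # gs" by (cases "runs \<tau> xs") auto
    have "runs \<tau>' xs \<noteq> []" using Cons2 by (simp add: runs_Nil_iff)
    then obtain g' gs' where R': "runs \<tau>' xs = g' # gs'" by (cases "runs \<tau>' xs") auto
    have hg: "hd g = y" using hd_runs[of xs \<tau>] R Cons2 by simp
    have hg': "hd g' = y" using hd_runs[of xs \<tau>'] R' Cons2 by simp
    have sx: "\<tau> x = \<tau> y \<longrightarrow> (x\<in>U \<longleftrightarrow> y\<in>U)" using Cons.prems(3) Cons2 by simp
    have tx: "\<tau> x = 1 \<or> \<tau> x = 2" "\<tau> y = 1 \<or> \<tau> y = 2" using Cons.prems(1) Cons2 by auto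
    have ux: "x \<in> U \<Longrightarrow> \<tau> x = 2" "y \<in> U \<Longrightarrow> \<tau> y = 2" using Cons.prems(2) by auto
    have e1: "runs \<tau> (x # xs) = (if \<tau> y = \<tau> x then (x # g) # gs else [x] # g # gs)"
      using runs_Cons_eq[of \<tau> x xs] R hg xne by simp
    have e2: "runs \<tau>' (x # xs) = (if \<tau>' y = \<tau>' x then (x # g') # gs' else [x] # g' # gs')"
      using runs_Cons_eq[of \<tau>' x xs] R' hg' xne by simp
    have IH2: "filter (\<lambda>r. \<tau>' (hd r) = 2) (g' # gs') = filter (\<lambda>r. \<tau> (hd r) = 2 \<and> hd r \<notin> U) (g # gs)"
      using IH R R' by simp
    have ky: "\<tau>' y = 2 \<longleftrightarrow> \<tau> y = 2 \<and> y \<notin> U" by (simp add: \<tau>'_def)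
    have kx: "\<tau>' x = 2 \<longleftrightarrow> \<tau> x = 2 \<and> x \<notin> U" by (simp add: \<tau>'_def)
    have T1: "filter (\<lambda>r. \<tau>' (hd r) = 2) gs' = filter (\<lambda>r. \<tau> (hd r) = 2 \<and> hd r \<notin> U) gs"
      using IH2 hg hg' ky by (cases "\<tau>' y = 2") auto
    have T2: "\<tau>' y = 2 \<Longrightarrow> g' = g" using IH2 hg hg' ky by auto
    have sx': "\<tau> x = \<tau> y \<Longrightarrow> \<tau>' x = \<tau>' y" using sx by (auto simp: \<tau>'_def)
    have "filter (\<lambda>r. \<tau>' (hd r) = 2) (runs \<tau>' (x # xs)) = filter (\<lambda>r. \<tau> (hd r) = 2 \<and> hd r \<notin> U) (runs \<tau> (x # xs))"
    proof (cases "\<tau>' y = \<tau>' x")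
      case c': True
      show ?thesis
      proof (cases "\<tau> y = \<tau> x")
        case True
        then show ?thesis unfolding e1 e2 using c' T1 T2 kx ky by simp
      next
        case False
        have "\<tau>' x \<noteq> 2"
        proof
          assume "\<tau>' x = 2"
          then have "\<tau>' y = 2" using c' by simp
          then show False using \<open>\<tau>' x = 2\<close> kx ky False by simp
        qed
        then show ?thesis unfolding e1 e2 using c' False T1 kx ky hg hg' tx by auto
      qed
    next
      case c': False
      then have "\<tau> y \<noteq> \<tau> x" using sx' by metis
      then show ?thesis unfolding e1 e2 using c' T1 T2 kx ky hg hg' by simp
    qed
    then show ?thesis unfolding \<tau>'_def .
  qed
qed

lemma retag1:
  fixes \<tau> :: "'b \<Rightarrow> nat"
  assumes "\<forall>x\<in>set L. \<tau> x = 1 \<or> \<tau> x = 2" "\<forall>x\<in>U. \<tau> x = 2"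
    "successively (\<lambda>x y. \<tau> x = \<tau> y \<longrightarrow> (x\<in>U \<longleftrightarrow> y\<in>U)) L"
  shows "\<forall>r\<in>set (runs (\<lambda>x. if x \<in> U then 1 else \<tau> x) L). (if hd r \<in> U then 1 else \<tau> (hd r)) = 1 \<longrightarrow>
            (\<exists>p\<in>set r. \<tau> p = 1) \<or> runs (\<lambda>x. if x \<in> U then 1 else \<tau> x) L = [r]"
  using assms
proof (induction L)
  case Nil then show ?case by simp
next
  case (Cons x xs)
  define \<tau>' where "\<tau>' = (\<lambda>x. if x \<in> U then 1 else \<tau> x)"
  show ?case
  proof (cases "xs = []")
    case True then show ?thesis using Cons.prems by (auto simp: runs_Cons_eq)
  next
    case False
    then obtain y ys where Cons2: "xs = y # ys" by (cases xs) auto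
    have xne: "xs \<noteq> []" "hd xs = y" using Cons2 by auto
    have IH: "\<forall>r\<in>set (runs \<tau>' xs). \<tau>' (hd r) = 1 \<longrightarrow> (\<exists>p\<in>set r. \<tau> p = 1) \<or> runs \<tau>' xs = [r]"
    proof -
      have a1: "\<forall>x\<in>set xs. \<tau> x = 1 \<or> \<tau> x = 2" using Cons.prems(1) by simp
      have a3: "successively (\<lambda>x y. \<tau> x = \<tau> y \<longrightarrow> (x\<in>U \<longleftrightarrow> y\<in>U)) xs"
        using Cons.prems(3) Cons2 by simp
      show ?thesis using Cons.IH[OF a1 Cons.prems(2) a3] unfolding \<tau>'_def .
    qed
    have "runs \<tau>' xs \<noteq> []" using Cons2 by (simp add: runs_Nil_iff)
    then obtain g' gs' where R': "runs \<tau>' xs = g' # gs'" by (cases "runs \<tau>' xs") auto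
    have hg': "hd g' = y" using hd_runs[of xs \<tau>'] R' Cons2 by simp
    have yg: "y \<in> set g'" using runs_hd_in[of g' \<tau>' xs] R' hg' by simp
    have cg: "\<forall>z\<in>set g'. \<tau>' z = \<tau>' y" using runs_const[of g' \<tau>' xs] R' hg' by auto
    have sx: "\<tau> x = \<tau> y \<longrightarrow> (x\<in>U \<longleftrightarrow> y\<in>U)" using Cons.prems(3) Cons2 by simp
    have tx: "\<tau> x = 1 \<or> \<tau> x = 2" "\<tau> y = 1 \<or> \<tau> y = 2" using Cons.prems(1) Cons2 by auto
    have ux: "x \<in> U \<Longrightarrow> \<tau> x = 2" "y \<in> U \<Longrightarrow> \<tau> y = 2" using Cons.prems(2) by auto
    have e2: "runs \<tau>' (x # xs) = (if \<tau>' y = \<tau>' x then (x # g') # gs' else [x] # g' # gs')"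
      using runs_Cons_eq[of \<tau>' x xs] R' hg' xne by simp
    have "\<forall>r\<in>set (runs \<tau>' (x#xs)). \<tau>' (hd r) = 1 \<longrightarrow> (\<exists>p\<in>set r. \<tau> p = 1) \<or> runs \<tau>' (x#xs) = [r]"
    proof (cases "\<tau>' y = \<tau>' x")
      case True
      have "\<tau>' (hd r) = 1 \<longrightarrow> (\<exists>p\<in>set r. \<tau> p = 1) \<or> (x # g') # gs' = [r]" if r: "r \<in> set ((x # g') # gs')" for r
      proof (cases "r = x # g'")
        case True
        show ?thesis
        proof
          assume t1: "\<tau>' (hd r) = 1"
          then have "\<tau>' (hd g') = 1" using True hg' \<open>\<tau>' y = \<tau>' x\<close> by simp
          moreover have "g' \<in> set (runs \<tau>' xs)" using R' by simp
          ultimately have "(\<exists>p\<in>set g'. \<tau> p = 1) \<or> runs \<tau>' xs = [g']" using IH by blast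
          then show "(\<exists>p\<in>set r. \<tau> p = 1) \<or> (x # g') # gs' = [r]"
          proof
            assume "\<exists>p\<in>set g'. \<tau> p = 1"
            then obtain p where "p \<in> set g'" "\<tau> p = 1" by blast
            then have "p \<in> set r" "\<tau> p = 1" using True by simp_all
            then show ?thesis by blast
          next
            assume "runs \<tau>' xs = [g']"
            then have "gs' = []" using R' by simp
            then show ?thesis using True by simp
          qed
        qed
      next
        case False
        then have rg: "r \<in> set gs'" using r by auto
        then have "r \<in> set (runs \<tau>' xs)" using R' by simp
        with IH have d: "\<tau>' (hd r) = 1 \<longrightarrow> (\<exists>p\<in>set r. \<tau> p = 1) \<or> runs \<tau>' xs = [r]" by blast
        have "runs \<tau>' xs \<noteq> [r]" using R' rg by auto
        then show ?thesis using d by blast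
      qed
      then show ?thesis using e2 True by simp
    next
      case False
      have "\<tau>' (hd r) = 1 \<longrightarrow> (\<exists>p\<in>set r. \<tau> p = 1) \<or> [x] # g' # gs' = [r]" if r: "r \<in> set ([x] # g' # gs')" for r
      proof (cases "r = [x]")
        case True
        have tx2: "\<tau> x = 2 \<longleftrightarrow> \<tau> x \<noteq> 1" "\<tau> y = 2 \<longleftrightarrow> \<tau> y \<noteq> 1" using tx by auto
        show ?thesis
        proof
          assume t1: "\<tau>' (hd r) = 1"
          have "\<tau> x = 1"
          proof (cases "x \<in> U")
            case False then show ?thesis using t1 True by (simp add: \<tau>'_def)
          next
            case xU: True
            then have "\<tau>' x = 1" "\<tau> x = 2" using ux by (simp_all add: \<tau>'_def)
            then have "\<tau>' y \<noteq> 1" using \<open>\<not> \<tau>' y = \<tau>' x\<close> by simp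
            then have "y \<notin> U" "\<tau> y \<noteq> 1" by (auto simp: \<tau>'_def split: if_splits)
            then have "\<tau> y = 2" using tx by simp
            then show ?thesis using sx xU \<open>y \<notin> U\<close> \<open>\<tau> x = 2\<close> by simp
          qed
          then show "(\<exists>p\<in>set r. \<tau> p = 1) \<or> [x] # g' # gs' = [r]" using True by simp
        qed
      next
        case F2: False
        then have r2: "r \<in> set (g' # gs')" using r by auto
        show ?thesis
        proof
          assume t1: "\<tau>' (hd r) = 1"
          have "r \<in> set (runs \<tau>' xs)" using R' r2 by simp
          with IH t1 have "(\<exists>p\<in>set r. \<tau> p = 1) \<or> runs \<tau>' xs = [r]" by blast
          then have "(\<exists>p\<in>set r. \<tau> p = 1) \<or> g' # gs' = [r]" using R' by simp
          then show "(\<exists>p\<in>set r. \<tau> p = 1) \<or> [x] # g' # gs' = [r]"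
          proof
            assume "g' # gs' = [r]"
            then have "r = g'" by simp
            then have "\<tau>' y = 1" using t1 hg' by simp
            have tx2: "\<tau> x = 2 \<longleftrightarrow> \<tau> x \<noteq> 1" "\<tau> y = 2 \<longleftrightarrow> \<tau> y \<noteq> 1" using tx by auto
            have "\<tau>' x \<noteq> 1" using False \<open>\<tau>' y = 1\<close> by simp
            then have "x \<notin> U" "\<tau> x \<noteq> 1" by (auto simp: \<tau>'_def split: if_splits)
            then have "\<tau> x = 2" using tx by simp
            have "y \<notin> U"
            proof
              assume "y \<in> U"
              then have "\<tau> y = 2" using ux by simp
              then show False using sx \<open>y \<in> U\<close> \<open>x \<notin> U\<close> \<open>\<tau> x = 2\<close> by simp
            qed
            then have "\<tau> y = 1" using \<open>\<tau>' y = 1\<close> by (simp add: \<tau>'_def)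
            then show ?thesis using yg \<open>r = g'\<close> by auto
          qed simp
        qed
      qed
      then show ?thesis using e2 False by simp
    qed
    then show ?thesis unfolding \<tau>'_def by simp
  qed
qed

lemma calg_smul0: "calg smul \<Longrightarrow> smul c 0 = 0"
proof -
  assume "calg smul"
  then have "smul c (0 + 0) = smul c 0 + smul c 0" unfolding calg_def by blast
  then show ?thesis by simp
qed

lemma wfun_unit:
  assumes "wfun K A smul F" "valid_word K A u" "valid_word K A v" "k \<in> K" "0 \<in> A k s"
  shows "F (u @ (k, s, (1, 0)) # v) = F (u @ v)"
  using assms unfolding wfun_def by (metis snd_conv)

lemma wfun_shift:
  assumes "calg smul" "wfun K A smul F" "valid_word K A u" "valid_word K A v" "k \<in> K" "0 \<in> A k s" "b \<in> A k s"
  shows "F (u @ (k, s, (lam + t, b)) # v) = F (u @ (k, s, (lam, b)) # v) + t * F (u @ v)"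
proof -
  have add: "F (u @ (k, s, uadd (lam, b) (t, 0)) # v) = F (u @ (k, s, (lam, b)) # v) + F (u @ (k, s, (t, 0)) # v)"
    using assms(2-7) unfolding wfun_def by (metis snd_conv)
  have sm: "F (u @ (k, s, usmul smul t (1, 0)) # v) = t * F (u @ (k, s, (1, 0)) # v)"
    using assms(2-7) unfolding wfun_def by (metis snd_conv)
  have u1: "uadd (lam, b) (t, 0) = (lam + t, b)" by (simp add: uadd_def)
  have u2: "usmul smul t (1, 0) = (t, 0)" by (simp add: usmul_def calg_smul0[OF assms(1)])
  show ?thesis using add sm u1 u2 wfun_unit[OF assms(2-6)] by simp
qed

definition isunit :: "'a::ring letter \<Rightarrow> bool" where
  "isunit l \<longleftrightarrow> snd (snd l) = (1, 0)"

lemma wfun_filter: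
  assumes "wfun K A smul F" "\<And>k s. k \<in> K \<Longrightarrow> 0 \<in> A k s"
  shows "valid_word K A u \<Longrightarrow> valid_word K A w \<Longrightarrow> F (u @ w) = F (u @ filter (\<lambda>l. \<not> isunit l) w)"
proof (induction w arbitrary: u)
  case Nil then show ?case by simp
next
  case (Cons l w)
  obtain k s c where l: "l = (k, s, c)" by (cases l) auto
  have vw: "valid_word K A w" using Cons.prems(2) by (simp add: valid_word_def)
  have lk: "k \<in> K" using Cons.prems(2) l by (simp add: valid_word_def valid_letter_def)
  show ?case
  proof (cases "isunit l")
    case True
    then have "c = (1, 0)" using l by (simp add: isunit_def)
    then have "F (u @ l # w) = F (u @ w)" using wfun_unit[OF assms(1) Cons.prems(1) vw lk assms(2)[OF lk]] l by simp
    then show ?thesis using Cons.IH[OF Cons.prems(1) vw] True by simp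
  next
    case False
    have vu: "valid_word K A (u @ [l])" using Cons.prems by (simp add: valid_word_def)
    have "F (u @ l # w) = F ((u @ [l]) @ w)" by simp
    also have "\<dots> = F ((u @ [l]) @ filter (\<lambda>l. \<not> isunit l) w)" using Cons.IH[OF vu vw] .
    finally show ?thesis using False by simp
  qed
qed

lemma wfun_filter0:
  assumes "wfun K A smul F" "\<And>k s. k \<in> K \<Longrightarrow> 0 \<in> A k s" "valid_word K A w"
  shows "F w = F (filter (\<lambda>l. \<not> isunit l) w)"
  using wfun_filter[OF assms(1,2), of "[]" w] assms(3) by (simp add: valid_word_def)

definition wd :: "(nat \<Rightarrow> nat) \<Rightarrow> (nat \<Rightarrow> side) \<Rightarrow> (nat \<Rightarrow> complex \<times> 'a) \<Rightarrow> nat list \<Rightarrow> 'a letter list" where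
  "wd \<tau> \<chi> x js = map (\<lambda>j. (\<tau> j, \<chi> j, x j)) js"

lemma valid_wd:
  "(\<And>i. i \<in> set js \<Longrightarrow> \<tau> i \<in> K \<and> snd (x i) \<in> A (\<tau> i) (\<chi> i)) \<Longrightarrow> valid_word K A (wd \<tau> \<chi> x js)"
  by (auto simp: valid_word_def valid_letter_def wd_def)

lemma wd_cong: "(\<And>i. i \<in> set js \<Longrightarrow> \<tau> i = \<tau>' i \<and> x i = x' i) \<Longrightarrow> wd \<tau> \<chi> x js = wd \<tau>' \<chi> x' js"
  by (auto simp: wd_def)

lemma wd_shift:
  assumes "calg smul" "wfun K A smul F" "\<And>k s. k \<in> K \<Longrightarrow> 0 \<in> A k s"
    "\<And>i. i \<in> set js \<Longrightarrow> \<tau> i \<in> K \<and> snd (x i) \<in> A (\<tau> i) (\<chi> i)"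
    "distinct js" "j \<in> set js"
  shows "F (wd \<tau> \<chi> (x(j := (fst (x j) + t, snd (x j)))) js) = F (wd \<tau> \<chi> x js) + t * F (wd \<tau> \<chi> (x(j := (1, 0))) js)"
proof -
  obtain ys zs where js: "js = ys @ j # zs" using split_list[OF assms(6)] by blast
  have nj: "j \<notin> set ys" "j \<notin> set zs" using assms(5) js by auto
  have e1: "wd \<tau> \<chi> (x(j := (fst (x j) + t, snd (x j)))) js = wd \<tau> \<chi> x ys @ (\<tau> j, \<chi> j, (fst (x j) + t, snd (x j))) # wd \<tau> \<chi> x zs"
    using nj js by (auto simp: wd_def)
  have e2: "wd \<tau> \<chi> x js = wd \<tau> \<chi> x ys @ (\<tau> j, \<chi> j, (fst (x j), snd (x j))) # wd \<tau> \<chi> x zs"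
    using nj js by (auto simp: wd_def)
  have e3: "wd \<tau> \<chi> (x(j := (1, 0))) js = wd \<tau> \<chi> x ys @ (\<tau> j, \<chi> j, (1, 0)) # wd \<tau> \<chi> x zs"
    using nj js by (auto simp: wd_def)
  have v1: "valid_word K A (wd \<tau> \<chi> x ys)" "valid_word K A (wd \<tau> \<chi> x zs)"
    using assms(4) js by (auto intro!: valid_wd)
  have kj: "\<tau> j \<in> K" "snd (x j) \<in> A (\<tau> j) (\<chi> j)" using assms(4,6) by auto
  show ?thesis
    unfolding e1 e2 e3
    using wfun_shift[OF assms(1,2) v1 kj(1) assms(3)[OF kj(1)] kj(2), of "fst (x j)" t]
      wfun_unit[OF assms(2) v1 kj(1) assms(3)[OF kj(1)]] by simp
qed

lemma wd_notin: "j \<notin> set js \<Longrightarrow> wd \<tau> \<chi> (x(j := y)) js = wd \<tau> \<chi> x js"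
  by (auto simp: wd_def)

definition shiftc :: "(nat \<Rightarrow> complex \<times> 'a) \<Rightarrow> (nat \<Rightarrow> complex) \<Rightarrow> nat \<Rightarrow> complex \<times> 'a" where
  "shiftc x t = (\<lambda>i. (fst (x i) + t i, snd (x i)))"

lemma shiftc_zero: "(\<And>i. t i = 0) \<Longrightarrow> shiftc x t = x"
  by (auto simp: shiftc_def)

lemma nz_z_lemma:
  assumes "calg smul" "wfun K A smul F" "\<And>k s. k \<in> K \<Longrightarrow> 0 \<in> A k s" "distinct js"
    "finite P"
  shows "P \<subseteq> set js \<Longrightarrow> (\<And>i. i \<in> set js \<Longrightarrow> \<tau> i \<in> K \<and> snd (x i) \<in> A (\<tau> i) (\<chi> i)) \<Longrightarrow>
         (\<And>i. i \<in> set js \<Longrightarrow> i \<notin> P \<Longrightarrow> x i = (1, 0)) \<Longrightarrow>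
     (\<exists>t. (\<forall>i. i \<notin> P \<longrightarrow> t i = 0) \<and> F (wd \<tau> \<chi> (shiftc x t) js) \<noteq> 0) \<and>
     (P \<noteq> {} \<longrightarrow> (\<exists>t. (\<forall>i. i \<notin> P \<longrightarrow> t i = 0) \<and> F (wd \<tau> \<chi> (shiftc x t) js) = 0))"
  using assms(5)
proof (induction P arbitrary: x rule: finite_induct)
  case empty
  have sx: "shiftc x (\<lambda>_. 0) = x" by (rule shiftc_zero) simp
  have v: "valid_word K A (wd \<tau> \<chi> x js)" using empty.prems(2) by (rule valid_wd)
  have "filter (\<lambda>l. \<not> isunit l) (wd \<tau> \<chi> x js) = []"
    using empty.prems(3) by (auto simp: wd_def isunit_def filter_empty_conv)
  then have "F (wd \<tau> \<chi> x js) = 1" using wfun_filter0[OF assms(2,3) v] assms(2) by (simp add: wfun_def)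
  then show ?case using sx by (intro conjI) (auto intro!: exI[of _ "\<lambda>_. 0"])
next
  case (insert j P)
  define x1 where "x1 = x(j := (1, 0))"
  have jis: "j \<in> set js" using insert.prems(1) by simp
  have p1: "P \<subseteq> set js" using insert.prems(1) by simp
  have p2: "\<And>i. i \<in> set js \<Longrightarrow> \<tau> i \<in> K \<and> snd (x1 i) \<in> A (\<tau> i) (\<chi> i)"
    using insert.prems(2) assms(3) by (auto simp: x1_def)
  have p3: "\<And>i. i \<in> set js \<Longrightarrow> i \<notin> P \<Longrightarrow> x1 i = (1, 0)"
    using insert.prems(3) by (auto simp: x1_def)
  obtain t where t: "\<forall>i. i \<notin> P \<longrightarrow> t i = 0" "F (wd \<tau> \<chi> (shiftc x1 t) js) \<noteq> 0"
    using insert.IH[OF p1 p2 p3] by blast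
  define c where "c = F (wd \<tau> \<chi> (shiftc x1 t) js)"
  define A0 where "A0 = F (wd \<tau> \<chi> (shiftc x t) js)"
  have tj: "t j = 0" using t(1) insert.hyps(2) by simp
  have key: "F (wd \<tau> \<chi> (shiftc x (t(j := s))) js) = A0 + s * c" for s
  proof -
    have v: "\<And>i. i \<in> set js \<Longrightarrow> \<tau> i \<in> K \<and> snd (shiftc x t i) \<in> A (\<tau> i) (\<chi> i)"
      using insert.prems(2) by (simp add: shiftc_def)
    have e1: "shiftc x (t(j := s)) = (shiftc x t)(j := (fst (shiftc x t j) + s, snd (shiftc x t j)))"
      using tj by (auto simp: shiftc_def)
    have e2: "(shiftc x t)(j := (1, 0)) = shiftc x1 t"
      using tj by (auto simp: shiftc_def x1_def)
    show ?thesis unfolding e1 A0_def c_def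
      using wd_shift[where x="shiftc x t" and t = s and \<tau>=\<tau> and \<chi>=\<chi> and js=js and j=j, OF assms(1,2,3) v assms(4) jis] e2 by simp
  qed
  have cne: "c \<noteq> 0" using t(2) c_def by simp
  have supp: "\<forall>i. i \<notin> insert j P \<longrightarrow> (t(j := s)) i = 0" for s using t(1) by simp
  have nz: "F (wd \<tau> \<chi> (shiftc x (t(j := (1 - A0) / c))) js) \<noteq> 0"
    using key[of "(1 - A0) / c"] cne by simp
  have z: "F (wd \<tau> \<chi> (shiftc x (t(j := - A0 / c))) js) = 0"
    using key[of "- A0 / c"] cne by simp
  show ?case using nz z supp by blast
qed

lemma chi_order_distinct: "distinct (chi_order \<chi> n)"
  by (auto simp: chi_order_def)

lemma chi_order_set: "set (chi_order \<chi> n) = {1..n}"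
proof -
  have "\<chi> i = Lft \<or> \<chi> i = Rgt" for i by (cases "\<chi> i") auto
  then show ?thesis by (auto simp: chi_order_def)
qed

lemma chi_order_cong: "(\<And>i. i \<in> {1..n} \<Longrightarrow> \<chi> i = \<chi>' i) \<Longrightarrow> chi_order \<chi> n = chi_order \<chi>' n"
proof -
  assume h: "\<And>i. i \<in> {1..n} \<Longrightarrow> \<chi> i = \<chi>' i"
  have "filter (\<lambda>i. \<chi> i = s) [1..<Suc n] = filter (\<lambda>i. \<chi>' i = s) [1..<Suc n]" for s
    by (rule filter_cong) (auto simp: h)
  then show ?thesis by (simp add: chi_order_def)
qed

lemma pi_co_cong: "(\<And>i. i \<in> {1..n} \<Longrightarrow> \<chi> i = \<chi>' i \<and> \<tau> i = \<tau>' i) \<Longrightarrow> pi_co \<chi> \<tau> n = pi_co \<chi>' \<tau>' n"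
proof -
  assume h: "\<And>i. i \<in> {1..n} \<Longrightarrow> \<chi> i = \<chi>' i \<and> \<tau> i = \<tau>' i"
  have "chi_order \<chi> n = chi_order \<chi>' n" using h by (intro chi_order_cong) auto
  moreover have "runs \<tau> (chi_order \<chi>' n) = runs \<tau>' (chi_order \<chi>' n)"
    using h by (intro runs_cong) (simp add: chi_order_set)
  ultimately show ?thesis by (simp add: pi_co_def)
qed

lemma pi_co_sub: "V \<in> pi_co \<chi> \<tau> n \<Longrightarrow> V \<subseteq> {1..n} \<and> V \<noteq> {}"
proof -
  assume "V \<in> pi_co \<chi> \<tau> n"
  then obtain r where r: "r \<in> set (runs \<tau> (chi_order \<chi> n))" "V = set r" by (auto simp: pi_co_def)
  have "set r \<subseteq> set (concat (runs \<tau> (chi_order \<chi> n)))" using r(1) by auto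
  then have "V \<subseteq> {1..n}" using r(2) concat_runs[of \<tau> "chi_order \<chi> n"] chi_order_set[of \<chi> n] by simp
  moreover have "V \<noteq> {}" using r runs_nonempty[of \<tau> "chi_order \<chi> n"] by auto
  ultimately show ?thesis by simp
qed

lemma pi_co_finite: "finite (pi_co \<chi> \<tau> n)"
  by (simp add: pi_co_def)

lemma pi_co_disj: "V \<in> pi_co \<chi> \<tau> n \<Longrightarrow> V' \<in> pi_co \<chi> \<tau> n \<Longrightarrow> j \<in> V \<Longrightarrow> j \<in> V' \<Longrightarrow> V = V'"
proof -
  assume a: "V \<in> pi_co \<chi> \<tau> n" "V' \<in> pi_co \<chi> \<tau> n" "j \<in> V" "j \<in> V'"
  obtain r where r: "r \<in> set (runs \<tau> (chi_order \<chi> n))" "V = set r" using a(1) by (auto simp: pi_co_def)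
  obtain r' where r': "r' \<in> set (runs \<tau> (chi_order \<chi> n))" "V' = set r'" using a(2) by (auto simp: pi_co_def)
  have "r = r'" using runs_unique[OF chi_order_distinct r(1) r'(1)] a(3,4) r(2) r'(2) by simp
  then show ?thesis using r(2) r'(2) by simp
qed

lemma pi_co_ex: "j \<in> {1..n} \<Longrightarrow> \<exists>V\<in>pi_co \<chi> \<tau> n. j \<in> V"
proof -
  assume "j \<in> {1..n}"
  then have "j \<in> set (concat (runs \<tau> (chi_order \<chi> n)))" using concat_runs[of \<tau> "chi_order \<chi> n"] chi_order_set[of \<chi> n] by simp
  then obtain r where "r \<in> set (runs \<tau> (chi_order \<chi> n))" "j \<in> set r" by auto
  then show ?thesis by (auto simp: pi_co_def)
qed

lemma pi_co_const: "V \<in> pi_co \<chi> \<tau> n \<Longrightarrow> i \<in> V \<Longrightarrow> j \<in> V \<Longrightarrow> \<tau> i = \<tau> j"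
proof -
  assume a: "V \<in> pi_co \<chi> \<tau> n" "i \<in> V" "j \<in> V"
  obtain r where r: "r \<in> set (runs \<tau> (chi_order \<chi> n))" "V = set r" using a(1) by (auto simp: pi_co_def)
  show ?thesis using runs_const[OF r(1), of i] runs_const[OF r(1), of j] a r(2) by simp
qed

lemma sorted_upt_set: "sorted_list_of_set {1..n} = [1..<Suc n]"
proof -
  have "{1..n} = {1..<Suc n}" by auto
  then show ?thesis by simp
qed

lemma sorted_filter_set: "sorted_list_of_set {j \<in> {1..n}. P j} = filter P [1..<Suc n]"
proof -
  have e: "{j \<in> {1..n}. P j} = set (filter P [1..<Suc n])" by (auto simp del: upt_Suc)
  have s: "sorted (filter P [1..<Suc n])" by (rule sorted_wrt_filter) (simp del: upt_Suc)
  have d: "distinct (filter P [1..<Suc n])" by (simp del: upt_Suc)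
  show ?thesis unfolding e
    by (rule sorted_distinct_set_unique) (use s d in \<open>simp_all del: upt_Suc\<close>)
qed

lemma subword_map: "V \<subseteq> {1..n} \<Longrightarrow> subword (map g [1..<Suc n]) V = map g (sorted_list_of_set V)"
proof -
  assume V: "V \<subseteq> {1..n}"
  have "finite V" using V finite_subset by blast
  have "map g [1..<Suc n] ! (j - 1) = g j" if "j \<in> V" for j
  proof -
    have j: "1 \<le> j" "j \<le> n" using that V by auto
    then have "j - 1 < length [1..<Suc n]" by simp
    then have "map g [1..<Suc n] ! (j - 1) = g ([1..<Suc n] ! (j - 1))" by (rule nth_map)
    also have "[1..<Suc n] ! (j - 1) = j" using j by (simp del: upt_Suc)
    finally show ?thesis .
  qed
  then show ?thesis unfolding subword_def using \<open>finite V\<close> by (intro map_cong) auto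
qed

lemma prod_zero_mem: "finite S \<Longrightarrow> V \<in> S \<Longrightarrow> g V = (0::complex) \<Longrightarrow> prod g S = 0"
  by (metis prod_zero_iff)

locale bm =
  fixes smul :: "complex \<Rightarrow> 'a::ring \<Rightarrow> 'a" and \<phi> :: "'a \<Rightarrow> complex"
    and A :: "nat \<Rightarrow> side \<Rightarrow> 'a set"
    and n :: nat and \<chi> :: "nat \<Rightarrow> side" and \<omega> :: "nat \<Rightarrow> nat" and a :: "nat \<Rightarrow> 'a"
    and \<Phi> \<Psi> \<Phi>1 \<Delta>1 \<Phi>2 :: "'a letter list \<Rightarrow> complex"
  assumes calg: "calg smul"
    and subalg: "\<And>k s. k \<in> {1, 2} \<Longrightarrow> subalgebra smul (A k s)"
    and n1: "n \<ge> 1"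
    and om: "\<And>j. j \<in> {1..n} \<Longrightarrow> \<omega> j \<in> {1, 2}"
    and aA: "\<And>j. j \<in> {1..n} \<Longrightarrow> a j \<in> A (\<omega> j) (\<chi> j)"
    and D1: "\<forall>w. w \<noteq> [] \<and> valid_word {1} A w \<and> nonunit_word w \<longrightarrow> \<Phi>1 w = phi_word \<phi> w \<and> \<Delta>1 w = 0"
    and cbf: "c_bifree {1, 2} A smul \<Phi> \<Psi> (\<lambda>k. if k = 1 then \<Phi>1 else \<Phi>2) (\<lambda>k. if k = 1 then \<Delta>1 else \<Phi>2)"
    and PW: "\<forall>w. w \<noteq> [] \<and> valid_word {1, 2} A w \<and> nonunit_word w \<longrightarrow> \<Phi> w = phi_word \<phi> w"
begin

definition "L = chi_order \<chi> n"
definition "cfg x \<longleftrightarrow> (\<forall>j\<in>{1..n}. \<omega> j = 1 \<longrightarrow> x j = (0, a j)) \<and> (\<forall>j\<in>{1..n}. \<omega> j = 2 \<longrightarrow> snd (x j) \<in> A 2 (\<chi> j))"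
definition "word x = wd \<omega> \<chi> x [1..<Suc n]"
definition "sub x V = wd \<omega> \<chi> x (sorted_list_of_set V)"
definition "W1 = {j \<in> {1..n}. \<omega> j = 1}"
definition "B2 = {V \<in> pi_co \<chi> \<omega> n. \<forall>j\<in>V. \<omega> j = 2}"
definition "ff x = \<Phi> (word x) - \<Phi> (sub x W1) * (\<Prod>V\<in>B2. \<Phi> (sub x V))"
definition "M x = {j \<in> {1..n}. \<omega> j = 2 \<and> x j \<noteq> (1, 0)}"

lemma zeroA: "k \<in> {1, 2} \<Longrightarrow> 0 \<in> A k s"
  using subalg by (simp add: subalgebra_def)

lemma zeroK: "k \<in> {1, 2::nat} \<Longrightarrow> 0 \<in> A k s" by (rule zeroA)

lemma wPhi: "wfun {1, 2} A smul \<Phi>" and wPsi: "wfun {1, 2} A smul \<Psi>"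
  using cbf by (simp_all add: c_bifree_def)

lemma Psi1: "valid_word {1} A w \<Longrightarrow> \<Psi> w = \<Delta>1 w"
  using cbf unfolding c_bifree_def by auto

lemma Psi2: "valid_word {2} A w \<Longrightarrow> \<Psi> w = \<Phi> w"
  using cbf unfolding c_bifree_def by auto

lemma cbf_prod: "w \<noteq> [] \<Longrightarrow> valid_word {1, 2} A w \<Longrightarrow>
   (\<forall>V\<in>pi_co (chi_of w) (omega_of w) (length w). \<Psi> (subword w V) = 0) \<Longrightarrow>
   \<Phi> w = (\<Prod>V\<in>pi_co (chi_of w) (omega_of w) (length w). \<Phi> (subword w V))"
  using cbf unfolding c_bifree_def by blast

lemma cfg_valid: "cfg x \<Longrightarrow> i \<in> {1..n} \<Longrightarrow> \<omega> i \<in> {1, 2} \<and> snd (x i) \<in> A (\<omega> i) (\<chi> i)"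
proof -
  assume c: "cfg x" and i: "i \<in> {1..n}"
  show ?thesis
  proof (cases "\<omega> i = 1")
    case True then show ?thesis using c i aA[OF i] by (simp add: cfg_def)
  next
    case False then have "\<omega> i = 2" using om[OF i] by simp
    then show ?thesis using c i by (simp add: cfg_def)
  qed
qed

lemma finB2: "finite B2" using pi_co_finite[of \<chi> \<omega> n] by (simp add: B2_def)

lemma ff_lin:
  assumes c: "cfg x" and j: "j \<in> {1..n}" "\<omega> j = 2"
  shows "ff (x(j := (fst (x j) + s, snd (x j)))) = ff x + s * ff (x(j := (1, 0)))"
proof -
  define x' where "x' = x(j := (fst (x j) + s, snd (x j)))"
  define x1 where "x1 = x(j := (1, 0))"
  have wf: "wfun {1, 2} A smul \<Phi>" by (rule wPhi)
  have vV: "\<And>V i. V \<subseteq> {1..n} \<Longrightarrow> i \<in> set (sorted_list_of_set V) \<Longrightarrow> \<omega> i \<in> {1, 2} \<and> snd (x i) \<in> A (\<omega> i) (\<chi> i)"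
  proof -
    fix V i assume "V \<subseteq> {1..n}" "i \<in> set (sorted_list_of_set V)"
    then have "i \<in> {1..n}" using finite_subset[of V "{1..n}"] by auto
    then show "\<omega> i \<in> {1, 2} \<and> snd (x i) \<in> A (\<omega> i) (\<chi> i)" by (rule cfg_valid[OF c])
  qed
  have lin_sub: "\<Phi> (sub x' V) = \<Phi> (sub x V) + s * \<Phi> (sub x1 V)" if V: "V \<subseteq> {1..n}" "j \<in> V" for V
  proof -
    have fin: "finite V" using V finite_subset by blast
    have js: "j \<in> set (sorted_list_of_set V)" using fin V(2) by simp
    show ?thesis unfolding sub_def x'_def x1_def
      by (rule wd_shift[OF calg wf zeroK vV[OF V(1)] distinct_sorted_list_of_set js])
  qed
  have word_eq: "\<Phi> (word x') = \<Phi> (word x) + s * \<Phi> (word x1)"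
  proof -
    have e: "word y = sub y {1..n}" for y by (simp only: word_def sub_def sorted_upt_set)
    show ?thesis unfolding e by (rule lin_sub) (use j in auto)
  qed
  have nW: "j \<notin> W1" using j by (simp add: W1_def)
  have subW: "sub x' W1 = sub x W1" "sub x1 W1 = sub x W1"
    unfolding sub_def x'_def x1_def using nW by (auto intro!: wd_notin simp: W1_def)
  obtain Vj where Vj: "Vj \<in> pi_co \<chi> \<omega> n" "j \<in> Vj" using pi_co_ex[OF j(1)] by blast
  have VjB: "Vj \<in> B2" using Vj pi_co_const[OF Vj(1) _ Vj(2)] j(2) by (auto simp: B2_def)
  have Vjs: "Vj \<subseteq> {1..n}" using pi_co_sub[OF Vj(1)] by simp
  have oth: "sub x' V = sub x V \<and> sub x1 V = sub x V" if "V \<in> B2 - {Vj}" for V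
  proof -
    have "V \<in> pi_co \<chi> \<omega> n" "V \<noteq> Vj" using that by (auto simp: B2_def)
    then have "j \<notin> V" using pi_co_disj[OF _ Vj(1) _ Vj(2)] by blast
    moreover have "finite V" using pi_co_sub[OF \<open>V \<in> pi_co \<chi> \<omega> n\<close>] finite_subset by blast
    ultimately show ?thesis unfolding sub_def x'_def x1_def by (auto intro!: wd_notin)
  qed
  define P where "P = (\<Prod>V\<in>B2 - {Vj}. \<Phi> (sub x V))"
  have pr: "(\<Prod>V\<in>B2. \<Phi> (sub y V)) = \<Phi> (sub y Vj) * (\<Prod>V\<in>B2 - {Vj}. \<Phi> (sub y V))" for y
    using prod.remove[OF finB2 VjB] by simp
  have p': "(\<Prod>V\<in>B2 - {Vj}. \<Phi> (sub x' V)) = P" unfolding P_def using oth by (intro prod.cong) auto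
  have p1: "(\<Prod>V\<in>B2 - {Vj}. \<Phi> (sub x1 V)) = P" unfolding P_def using oth by (intro prod.cong) auto
  have "ff x' = \<Phi> (word x) + s * \<Phi> (word x1) - \<Phi> (sub x W1) * ((\<Phi> (sub x Vj) + s * \<Phi> (sub x1 Vj)) * P)"
    unfolding ff_def using word_eq subW pr[of x'] p' lin_sub[OF Vjs Vj(2)] by simp
  also have "\<dots> = ff x + s * ff x1"
    unfolding ff_def using subW pr[of x] pr[of x1] p1 P_def by (simp add: algebra_simps)
  finally show ?thesis unfolding x'_def x1_def .
qed

end

context bm
begin

lemma M_fin: "finite (M x)" by (simp add: M_def)

lemma cfg_shift: "cfg x \<Longrightarrow> (\<forall>i. i \<notin> M x \<longrightarrow> t i = 0) \<Longrightarrow> cfg (shiftc x t)"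
proof -
  assume c: "cfg x" and t: "\<forall>i. i \<notin> M x \<longrightarrow> t i = 0"
  have "shiftc x t i = x i" if "i \<in> {1..n}" "\<omega> i = 1" for i
  proof -
    have "i \<notin> M x" using that by (simp add: M_def)
    then show ?thesis using t by (simp add: shiftc_def)
  qed
  then show ?thesis using c by (simp add: cfg_def shiftc_def)
qed

lemma cfg_unit: "cfg y \<Longrightarrow> \<omega> j = 2 \<Longrightarrow> cfg (y(j := (1, 0)))"
  using zeroA[of 2] by (auto simp: cfg_def)

lemma shift_inv:
  assumes c: "cfg x" and IH: "\<And>y. cfg y \<Longrightarrow> card (M y) < card (M x) \<Longrightarrow> ff y = 0"
  shows "finite F \<Longrightarrow> F \<subseteq> M x \<Longrightarrow> (\<forall>i. i \<notin> F \<longrightarrow> t i = 0) \<Longrightarrow> ff (shiftc x t) = ff x"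
proof (induction F arbitrary: t rule: finite_induct)
  case empty
  then have "shiftc x t = x" by (intro shiftc_zero) simp
  then show ?case by simp
next
  case (insert j F)
  define t0 where "t0 = t(j := 0)"
  define y where "y = shiftc x t0"
  have t0: "\<forall>i. i \<notin> F \<longrightarrow> t0 i = 0" using insert.prems(2) by (simp add: t0_def)
  have IH1: "ff y = ff x" unfolding y_def using insert.IH[OF _ t0] insert.prems(1) by simp
  have jM: "j \<in> M x" using insert.prems(1) by simp
  then have j: "j \<in> {1..n}" "\<omega> j = 2" by (auto simp: M_def)
  have t0M: "\<forall>i. i \<notin> M x \<longrightarrow> t0 i = 0" using t0 insert.prems(1) by auto
  have cy: "cfg y" unfolding y_def using cfg_shift[OF c t0M] .
  have e: "shiftc x t = y(j := (fst (y j) + t j, snd (y j)))"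
    by (auto simp: y_def shiftc_def t0_def)
  have lin: "ff (shiftc x t) = ff y + t j * ff (y(j := (1, 0)))"
    unfolding e by (rule ff_lin[OF cy j])
  have sub: "M (y(j := (1, 0))) \<subseteq> M x - {j}"
  proof
    fix i assume i: "i \<in> M (y(j := (1, 0)))"
    then have i1: "i \<in> {1..n}" "\<omega> i = 2" "i \<noteq> j" "y i \<noteq> (1, 0)" by (auto simp: M_def split: if_splits)
    show "i \<in> M x - {j}"
    proof (rule ccontr)
      assume "i \<notin> M x - {j}"
      then have "i \<notin> M x" using i1 by simp
      then have "x i = (1, 0)" "t0 i = 0" using i1 t0M by (auto simp: M_def)
      then have "y i = (1, 0)" by (simp add: y_def shiftc_def)
      then show False using i1 by simp
    qed
  qed
  have "card (M (y(j := (1, 0)))) \<le> card (M x - {j})" using sub M_fin by (intro card_mono) auto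
  also have "\<dots> < card (M x)" by (rule card_Diff1_less[OF M_fin jM])
  finally have "ff (y(j := (1, 0))) = 0" using IH cfg_unit[OF cy j(2)] by blast
  then show ?case using lin IH1 by simp
qed

end

lemma filt_wd_eq:
  "(\<And>i. i \<in> set js \<Longrightarrow> (\<tau> i = \<tau>' i \<and> x i = x' i) \<or> (x i = (1, 0) \<and> x' i = (1, 0))) \<Longrightarrow>
   filter (\<lambda>l. \<not> isunit l) (wd \<tau> \<chi> x js) = filter (\<lambda>l. \<not> isunit l) (wd \<tau>' \<chi> x' js)"
proof (induction js)
  case Nil then show ?case by (simp add: wd_def)
next
  case (Cons j js)
  then have IH: "filter (\<lambda>l. \<not> isunit l) (wd \<tau> \<chi> x js) = filter (\<lambda>l. \<not> isunit l) (wd \<tau>' \<chi> x' js)" by simp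
  have "(\<tau> j = \<tau>' j \<and> x j = x' j) \<or> (x j = (1, 0) \<and> x' j = (1, 0))" using Cons.prems by simp
  then show ?case using IH by (auto simp: wd_def isunit_def)
qed

lemma nth_wd: "i \<in> {1..n} \<Longrightarrow> wd \<tau> \<chi> x [1..<Suc n] ! (i - 1) = (\<tau> i, \<chi> i, x i)"
proof -
  assume i: "i \<in> {1..n}"
  then have "i - 1 < length [1..<Suc n]" by auto
  then have "wd \<tau> \<chi> x [1..<Suc n] ! (i - 1) = (\<lambda>j. (\<tau> j, \<chi> j, x j)) ([1..<Suc n] ! (i - 1))"
    unfolding wd_def by (rule nth_map)
  also have "[1..<Suc n] ! (i - 1) = i" using i by (simp del: upt_Suc)
  finally show ?thesis by simp
qed

context bm
begin

lemma valid_sub: "cfg x \<Longrightarrow> V \<subseteq> {1..n} \<Longrightarrow> valid_word {1, 2} A (sub x V)"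
proof -
  assume c: "cfg x" and V: "V \<subseteq> {1..n}"
  have fin: "finite V" using V finite_subset by blast
  show ?thesis unfolding sub_def
  proof (rule valid_wd)
    fix i assume "i \<in> set (sorted_list_of_set V)"
    then have "i \<in> {1..n}" using fin V by auto
    then show "\<omega> i \<in> {1, 2} \<and> snd (x i) \<in> A (\<omega> i) (\<chi> i)" by (rule cfg_valid[OF c])
  qed
qed

lemma word_sub: "word x = sub x {1..n}"
  by (simp only: word_def sub_def sorted_upt_set)

lemma caseA: assumes c: "cfg x" and M0: "M x = {}" shows "ff x = 0"
proof -
  have unit2: "x i = (1, 0)" if "i \<in> {1..n}" "\<omega> i = 2" for i
    using M0 that by (auto simp: M_def)
  have W1s: "W1 \<subseteq> {1..n}" by (auto simp: W1_def)
  have e1: "\<Phi> (word x) = \<Phi> (filter (\<lambda>l. \<not> isunit l) (sub x {1..n}))"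
    unfolding word_sub by (rule wfun_filter0[OF wPhi zeroK valid_sub[OF c]]) auto
  have e2: "\<Phi> (sub x W1) = \<Phi> (filter (\<lambda>l. \<not> isunit l) (sub x W1))"
    by (rule wfun_filter0[OF wPhi zeroK valid_sub[OF c W1s]])
  have f1: "filter (\<lambda>l. \<not> isunit l) (sub x {1..n}) = filter (\<lambda>l. \<not> isunit l) (sub x W1)"
  proof -
    have "filter (\<lambda>l. \<not> isunit l) (sub x {1..n}) = wd \<omega> \<chi> x (filter (\<lambda>i. \<not> isunit (\<omega> i, \<chi> i, x i)) [1..<Suc n])"
      unfolding sub_def wd_def sorted_upt_set by (simp add: filter_map comp_def del: upt_Suc)
    also have "filter (\<lambda>i. \<not> isunit (\<omega> i, \<chi> i, x i)) [1..<Suc n] = filter (\<lambda>i. \<omega> i = 1) [1..<Suc n]"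
    proof (rule filter_cong)
      fix i assume "i \<in> set [1..<Suc n]"
      then have i: "i \<in> {1..n}" by (simp del: upt_Suc)
      show "(\<not> isunit (\<omega> i, \<chi> i, x i)) = (\<omega> i = 1)"
      proof (cases "\<omega> i = 1")
        case True then show ?thesis using c i by (simp add: cfg_def isunit_def)
      next
        case False then have "\<omega> i = 2" using om[OF i] by simp
        then show ?thesis using unit2[OF i] by (simp add: isunit_def)
      qed
    qed simp
    also have "wd \<omega> \<chi> x (filter (\<lambda>i. \<omega> i = 1) [1..<Suc n]) = sub x W1"
      unfolding sub_def W1_def sorted_filter_set ..
    also have "\<dots> = filter (\<lambda>l. \<not> isunit l) (sub x W1)"
    proof -
      have "\<forall>l\<in>set (sub x W1). \<not> isunit l"
        using c finite_subset[OF W1s] by (auto simp: sub_def wd_def W1_def cfg_def isunit_def)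
      then show ?thesis by simp
    qed
    finally show ?thesis .
  qed
  have p1: "\<Phi> (sub x V) = 1" if V: "V \<in> B2" for V
  proof -
    have Vs: "V \<subseteq> {1..n}" "finite V" "\<forall>j\<in>V. \<omega> j = 2" using V pi_co_sub[of V \<chi> \<omega> n] finite_subset
      by (auto simp: B2_def)
    have "\<Phi> (sub x V) = \<Phi> (filter (\<lambda>l. \<not> isunit l) (sub x V))"
      by (rule wfun_filter0[OF wPhi zeroK valid_sub[OF c Vs(1)]])
    also have "filter (\<lambda>l. \<not> isunit l) (sub x V) = []"
      using Vs unit2 by (auto simp: sub_def wd_def isunit_def filter_empty_conv)
    finally show ?thesis using wPhi by (simp add: wfun_def)
  qed
  have "(\<Prod>V\<in>B2. \<Phi> (sub x V)) = 1" using p1 by simp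
  then show ?thesis unfolding ff_def using e1 e2 f1 by simp
qed

end

context bm
begin

lemma L_set: "set L = {1..n}" by (simp add: L_def chi_order_set)
lemma L_dist: "distinct L" by (simp add: L_def chi_order_distinct)

lemma retag_zero:
  assumes c: "cfg xt" and V0: "V0 \<in> B2" "V0 \<inter> Mx \<noteq> {}"
    and zero: "\<And>V. V \<in> B2 \<Longrightarrow> V \<inter> Mx \<noteq> {} \<Longrightarrow> \<Phi> (sub xt V) = 0"
    and units: "\<And>V i. V \<in> B2 \<Longrightarrow> V \<inter> Mx = {} \<Longrightarrow> i \<in> V \<Longrightarrow> xt i = (1, 0)"
  shows "\<Phi> (word xt) = 0"
proof -
  define U where "U = \<Union>{V \<in> B2. V \<inter> Mx = {}}"
  define \<tau>' where "\<tau>' = (\<lambda>i. if i \<in> U then 1 else \<omega> i)"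
  define w' where "w' = wd \<tau>' \<chi> xt [1..<Suc n]"
  have piL: "pi_co \<chi> \<tau> n = set (map set (runs \<tau> L))" for \<tau> :: "nat \<Rightarrow> nat" by (simp add: pi_co_def L_def)
  have U_char: "i \<in> U \<longleftrightarrow> set r \<in> B2 \<and> set r \<inter> Mx = {}" if r: "r \<in> set (runs \<omega> L)" "i \<in> set r" for r i
  proof
    assume "i \<in> U"
    then obtain V where V: "V \<in> B2" "V \<inter> Mx = {}" "i \<in> V" by (auto simp: U_def)
    have "set r \<in> pi_co \<chi> \<omega> n" using r(1) piL by simp
    moreover have "V \<in> pi_co \<chi> \<omega> n" using V(1) by (simp add: B2_def)
    ultimately have "V = set r" using pi_co_disj V(3) r(2) by blast
    then show "set r \<in> B2 \<and> set r \<inter> Mx = {}" using V by simp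
  next
    assume "set r \<in> B2 \<and> set r \<inter> Mx = {}"
    then show "i \<in> U" using r(2) by (auto simp: U_def)
  qed
  have U2: "i \<in> U \<Longrightarrow> \<omega> i = 2 \<and> i \<in> {1..n} \<and> xt i = (1, 0)" for i
  proof -
    assume "i \<in> U"
    then obtain V where V: "V \<in> B2" "V \<inter> Mx = {}" "i \<in> V" by (auto simp: U_def)
    then show ?thesis using units[OF V] pi_co_sub[of V \<chi> \<omega> n] by (auto simp: B2_def)
  qed
  have h1: "\<forall>i\<in>set L. \<omega> i = 1 \<or> \<omega> i = 2" using om L_set by auto
  have h2: "\<forall>i\<in>U. \<omega> i = 2" using U2 by blast
  have h3: "successively (\<lambda>x y. \<omega> x = \<omega> y \<longrightarrow> (x\<in>U \<longleftrightarrow> y\<in>U)) L"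
  proof (rule successively_mono[OF runs_succ[of \<omega> L]])
    fix p q assume "p \<in> set L" "q \<in> set L"
    assume h: "\<omega> p = \<omega> q \<longrightarrow> (\<exists>r\<in>set (runs \<omega> L). p \<in> set r \<and> q \<in> set r)"
    show "\<omega> p = \<omega> q \<longrightarrow> (p\<in>U \<longleftrightarrow> q\<in>U)"
    proof
      assume "\<omega> p = \<omega> q"
      with h obtain r where r: "r \<in> set (runs \<omega> L)" "p \<in> set r" "q \<in> set r" by blast
      show "p\<in>U \<longleftrightarrow> q\<in>U" using U_char[OF r(1,2)] U_char[OF r(1,3)] by simp
    qed
  qed
  have R2: "filter (\<lambda>r. \<tau>' (hd r) = 2) (runs \<tau>' L) = filter (\<lambda>r. \<omega> (hd r) = 2 \<and> hd r \<notin> U) (runs \<omega> L)"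
    unfolding \<tau>'_def by (rule retag2[OF h1 h2 h3])
  have R1: "\<forall>r\<in>set (runs \<tau>' L). \<tau>' (hd r) = 1 \<longrightarrow> (\<exists>p\<in>set r. \<omega> p = 1) \<or> runs \<tau>' L = [r]"
    using retag1[OF h1 h2 h3] unfolding \<tau>'_def by simp
  obtain r0 where r0: "r0 \<in> set (runs \<omega> L)" "V0 = set r0" using V0(1) piL by (auto simp: B2_def)
  have hr0: "hd r0 \<in> set r0" using r0(1) by (rule runs_hd_in)
  have r0U: "i \<notin> U" if "i \<in> set r0" for i using U_char[OF r0(1) that] r0(2) V0 by simp
  have r0w: "\<omega> (hd r0) = 2" using V0(1) r0(2) hr0 by (auto simp: B2_def)
  have r0': "r0 \<in> set (runs \<tau>' L)"
  proof -
    have "r0 \<in> set (filter (\<lambda>r. \<omega> (hd r) = 2 \<and> hd r \<notin> U) (runs \<omega> L))" using r0(1) r0w r0U[OF hr0] by simp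
    then have "r0 \<in> set (filter (\<lambda>r. \<tau>' (hd r) = 2) (runs \<tau>' L))" using R2 by simp
    then show ?thesis by simp
  qed
  have t'r0: "\<tau>' (hd r0) = 2" using r0w r0U[OF hr0] by (simp add: \<tau>'_def)
  have vt: "\<tau>' i \<in> {1, 2} \<and> snd (xt i) \<in> A (\<tau>' i) (\<chi> i)" if i: "i \<in> {1..n}" for i
  proof (cases "i \<in> U")
    case True then show ?thesis using U2[OF True] zeroA[of 1] by (simp add: \<tau>'_def)
  next
    case False then show ?thesis using cfg_valid[OF c i] by (simp add: \<tau>'_def)
  qed
  have vw': "valid_word {1, 2} A w'" unfolding w'_def by (rule valid_wd) (use vt in \<open>simp del: upt_Suc\<close>)
  have vwx: "valid_word {1, 2} A (word xt)" unfolding word_sub by (rule valid_sub[OF c]) auto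
  have step1: "\<Phi> (word xt) = \<Phi> w'"
  proof -
    have "filter (\<lambda>l. \<not> isunit l) (wd \<omega> \<chi> xt [1..<Suc n]) = filter (\<lambda>l. \<not> isunit l) (wd \<tau>' \<chi> xt [1..<Suc n])"
    proof (rule filt_wd_eq)
      fix i assume "i \<in> set [1..<Suc n]"
      show "(\<omega> i = \<tau>' i \<and> xt i = xt i) \<or> (xt i = (1, 0) \<and> xt i = (1, 0))"
        using U2[of i] by (cases "i \<in> U") (auto simp: \<tau>'_def)
    qed
    then show ?thesis
      using wfun_filter0[OF wPhi zeroK vwx] wfun_filter0[OF wPhi zeroK vw'] unfolding word_def w'_def by simp
  qed
  have lw: "length w' = n" by (simp add: w'_def wd_def)
  have pw: "pi_co (chi_of w') (omega_of w') (length w') = pi_co \<chi> \<tau>' n"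
    unfolding lw
  proof (rule pi_co_cong)
    fix i assume i: "i \<in> {1..n}"
    have "w' ! (i - 1) = (\<tau>' i, \<chi> i, xt i)" unfolding w'_def by (rule nth_wd[OF i])
    then show "chi_of w' i = \<chi> i \<and> omega_of w' i = \<tau>' i" by (simp add: chi_of_def omega_of_def)
  qed
  have sw: "subword w' V = wd \<tau>' \<chi> xt (sorted_list_of_set V)" if "V \<subseteq> {1..n}" for V
    unfolding w'_def wd_def by (rule subword_map[OF that])
  have psi0: "\<Psi> (wd \<tau>' \<chi> xt (sorted_list_of_set V)) = 0" if V: "V \<in> pi_co \<chi> \<tau>' n" for V
  proof -
    obtain r where r: "r \<in> set (runs \<tau>' L)" "V = set r" using V piL by auto
    have hr: "hd r \<in> set r" using r(1) by (rule runs_hd_in)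
    have Vs: "V \<subseteq> {1..n}" "finite V" using pi_co_sub[OF V] finite_subset by auto
    have hrn: "hd r \<in> {1..n}" using Vs hr r(2) by auto
    have ct: "\<tau>' i = \<tau>' (hd r)" if "i \<in> V" for i using runs_const[OF r(1)] that r(2) by simp
    show ?thesis
    proof (cases "\<tau>' (hd r) = 2")
      case True
      then have "r \<in> set (filter (\<lambda>r. \<tau>' (hd r) = 2) (runs \<tau>' L))" using r(1) by simp
      then have rr: "r \<in> set (runs \<omega> L)" "\<omega> (hd r) = 2" "hd r \<notin> U" using R2 by auto
      have rB: "set r \<in> B2"
      proof -
        have "set r \<in> pi_co \<chi> \<omega> n" using rr(1) piL by simp
        moreover have "\<forall>j\<in>set r. \<omega> j = 2" using runs_const[OF rr(1)] rr(2) by auto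
        ultimately show ?thesis by (simp add: B2_def)
      qed
      have rM: "set r \<inter> Mx \<noteq> {}" using U_char[OF rr(1) hr] rB rr(3) by simp
      have nU: "i \<notin> U" if "i \<in> V" for i using U_char[OF rr(1)] that r(2) rB rM by simp
      have eq: "wd \<tau>' \<chi> xt (sorted_list_of_set V) = sub xt V"
        unfolding sub_def by (rule wd_cong) (use nU Vs in \<open>simp add: \<tau>'_def\<close>)
      have v2: "valid_word {2} A (sub xt V)"
        unfolding sub_def
      proof (rule valid_wd)
        fix i assume "i \<in> set (sorted_list_of_set V)"
        then have i: "i \<in> V" using Vs by simp
        then have o2: "\<omega> i = 2" using runs_const[OF rr(1)] rr(2) r(2) by simp
        have iN: "i \<in> {1..n}" using i Vs by auto
        show "\<omega> i \<in> {2} \<and> snd (xt i) \<in> A (\<omega> i) (\<chi> i)" using cfg_valid[OF c iN] o2 by simp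
      qed
      show ?thesis unfolding eq using Psi2[OF v2] zero[OF rB rM] r(2) by simp
    next
      case False
      have t1: "\<tau>' (hd r) = 1" using False vt[OF hrn] by auto
      have "(\<exists>p\<in>set r. \<omega> p = 1) \<or> runs \<tau>' L = [r]" using R1 r(1) t1 by blast
      moreover have "runs \<tau>' L \<noteq> [r]"
      proof
        assume "runs \<tau>' L = [r]"
        then have "r0 = r" using r0' by simp
        then show False using t'r0 t1 by simp
      qed
      ultimately obtain p where p: "p \<in> V" "\<omega> p = 1" using r(2) by auto
      have pn: "p \<in> {1..n}" using p Vs by auto
      have t1V: "\<tau>' i = 1" if "i \<in> V" for i using ct[OF that] t1 by simp
      have kept: "xt i = (0, a i) \<and> \<omega> i = 1" if "i \<in> V" "xt i \<noteq> (1, 0)" for i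
      proof -
        have "i \<notin> U" using that U2 by auto
        then have "\<omega> i = 1" using t1V[OF that(1)] by (simp add: \<tau>'_def)
        moreover have "i \<in> {1..n}" using that Vs by auto
        ultimately show ?thesis using c by (simp add: cfg_def)
      qed
      define w where "w = wd \<tau>' \<chi> xt (sorted_list_of_set V)"
      have v1: "valid_word {1} A w" unfolding w_def
      proof (rule valid_wd)
        fix i assume "i \<in> set (sorted_list_of_set V)"
        then have i: "i \<in> V" using Vs by simp
        show "\<tau>' i \<in> {1} \<and> snd (xt i) \<in> A (\<tau>' i) (\<chi> i)"
        proof (cases "xt i = (1, 0)")
          case True then show ?thesis using t1V[OF i] zeroA[of 1] by simp
        next
          case False
          then have "xt i = (0, a i)" "\<omega> i = 1" using kept[OF i] by auto
          then show ?thesis using t1V[OF i] aA[of i] i Vs by auto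
        qed
      qed
      have v12: "valid_word {1, 2} A w" using v1 by (auto simp: valid_word_def valid_letter_def)
      define w1 where "w1 = filter (\<lambda>l. \<not> isunit l) w"
      have "\<Psi> w = \<Psi> w1" unfolding w1_def by (rule wfun_filter0[OF wPsi zeroK v12])
      moreover have "w1 \<noteq> []"
      proof -
        have "(\<tau>' p, \<chi> p, xt p) \<in> set w" using p(1) Vs by (simp add: w_def wd_def)
        moreover have "xt p = (0, a p)" using c p pn by (simp add: cfg_def)
        ultimately have "(\<tau>' p, \<chi> p, xt p) \<in> set w1" by (simp add: w1_def isunit_def)
        then show ?thesis by auto
      qed
      moreover have "valid_word {1} A w1" using v1 by (auto simp: w1_def valid_word_def)
      moreover have "nonunit_word w1"
        unfolding nonunit_word_def
      proof
        fix l assume l: "l \<in> set w1"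
        then obtain i where i: "i \<in> V" "l = (\<tau>' i, \<chi> i, xt i)" "\<not> isunit l"
          using Vs by (auto simp: w1_def w_def wd_def)
        then have "xt i \<noteq> (1, 0)" by (simp add: isunit_def)
        then have "xt i = (0, a i)" using kept[OF i(1)] by simp
        then show "fst (snd (snd l)) = 0" using i(2) by simp
      qed
      ultimately have "\<Psi> w = 0" using Psi1 D1 by simp
      then show ?thesis by (simp add: w_def)
    qed
  qed
  have V0t: "V0 \<in> pi_co \<chi> \<tau>' n" using r0' r0(2) piL by simp
  have V0s: "V0 \<subseteq> {1..n}" "finite V0" using pi_co_sub[OF V0t] finite_subset by auto
  have V0z: "\<Phi> (wd \<tau>' \<chi> xt (sorted_list_of_set V0)) = 0"
  proof -
    have "wd \<tau>' \<chi> xt (sorted_list_of_set V0) = sub xt V0"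
      unfolding sub_def by (rule wd_cong) (use r0U r0(2) V0s in \<open>simp add: \<tau>'_def\<close>)
    then show ?thesis using zero[OF V0] by simp
  qed
  have "\<Phi> w' = (\<Prod>V\<in>pi_co (chi_of w') (omega_of w') (length w'). \<Phi> (subword w' V))"
  proof (rule cbf_prod)
    show "w' \<noteq> []" using n1 lw by auto
    show "valid_word {1, 2} A w'" by (rule vw')
    show "\<forall>V\<in>pi_co (chi_of w') (omega_of w') (length w'). \<Psi> (subword w' V) = 0"
      unfolding pw
    proof
      fix V assume V: "V \<in> pi_co \<chi> \<tau>' n"
      have "V \<subseteq> {1..n}" using pi_co_sub[OF V] by simp
      then show "\<Psi> (subword w' V) = 0" using sw psi0[OF V] by simp
    qed
  qed
  also have "\<dots> = (\<Prod>V\<in>pi_co \<chi> \<tau>' n. \<Phi> (wd \<tau>' \<chi> xt (sorted_list_of_set V)))"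
    unfolding pw
  proof (rule prod.cong)
    fix V assume V: "V \<in> pi_co \<chi> \<tau>' n"
    have "V \<subseteq> {1..n}" using pi_co_sub[OF V] by simp
    then show "\<Phi> (subword w' V) = \<Phi> (wd \<tau>' \<chi> xt (sorted_list_of_set V))" using sw by simp
  qed simp
  also have "\<dots> = 0" by (rule prod_zero_mem[OF pi_co_finite V0t]) (use V0z in simp)
  finally show ?thesis using step1 by simp
qed

end

context bm
begin

lemma ff_zero: "cfg x \<Longrightarrow> ff x = 0"
proof (induction "card (M x)" arbitrary: x rule: less_induct)
  case less
  note c = less.prems
  show ?case
  proof (cases "M x = {}")
    case True then show ?thesis using caseA[OF c] by simp
  next
    case False
    then obtain j0 where j0: "j0 \<in> M x" by blast
    then have j0n: "j0 \<in> {1..n}" "\<omega> j0 = 2" by (auto simp: M_def)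
    obtain V0 where V0: "V0 \<in> pi_co \<chi> \<omega> n" "j0 \<in> V0" using pi_co_ex[OF j0n(1)] by blast
    have V0B: "V0 \<in> B2" using V0 pi_co_const[OF V0(1) _ V0(2)] j0n(2) by (auto simp: B2_def)
    have V0M: "V0 \<inter> M x \<noteq> {}" using V0(2) j0 by blast
    have unitsx: "x i = (1, 0)" if "V \<in> B2" "i \<in> V" "i \<notin> M x" for V i
    proof -
      have "i \<in> {1..n}" using that pi_co_sub[of V \<chi> \<omega> n] by (auto simp: B2_def)
      moreover have "\<omega> i = 2" using that by (auto simp: B2_def)
      ultimately show ?thesis using that(3) by (simp add: M_def)
    qed
    have exV: "\<exists>t. (\<forall>i. i \<notin> V \<inter> M x \<longrightarrow> t i = 0) \<and> \<Phi> (wd \<omega> \<chi> (shiftc x t) (sorted_list_of_set V)) = 0"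
      if V: "V \<in> B2" "V \<inter> M x \<noteq> {}" for V
    proof -
      have Vs: "V \<subseteq> {1..n}" "finite V" using V pi_co_sub[of V \<chi> \<omega> n] finite_subset by (auto simp: B2_def)
      have h1: "V \<inter> M x \<subseteq> set (sorted_list_of_set V)" using Vs by auto
      have h2: "\<omega> i \<in> {1, 2} \<and> snd (x i) \<in> A (\<omega> i) (\<chi> i)" if "i \<in> set (sorted_list_of_set V)" for i
      proof -
        have "i \<in> {1..n}" using that Vs by auto
        then show ?thesis by (rule cfg_valid[OF c])
      qed
      have h3: "x i = (1, 0)" if "i \<in> set (sorted_list_of_set V)" "i \<notin> V \<inter> M x" for i
        using unitsx[OF V(1)] that Vs by auto
      have fin: "finite (V \<inter> M x)" using Vs by simp
      show ?thesis
        using nz_z_lemma[where \<tau>=\<omega> and \<chi>=\<chi> and x=x and js="sorted_list_of_set V" and P="V \<inter> M x",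
            OF calg wPhi zeroK distinct_sorted_list_of_set fin h1 h2 h3] V(2) by blast
    qed
    define tV where "tV V = (SOME t. (\<forall>i. i \<notin> V \<inter> M x \<longrightarrow> t i = 0) \<and> \<Phi> (wd \<omega> \<chi> (shiftc x t) (sorted_list_of_set V)) = 0)" for V
    have tV: "(\<forall>i. i \<notin> V \<inter> M x \<longrightarrow> tV V i = 0) \<and> \<Phi> (wd \<omega> \<chi> (shiftc x (tV V)) (sorted_list_of_set V)) = 0"
      if "V \<in> B2" "V \<inter> M x \<noteq> {}" for V
      unfolding tV_def by (rule someI_ex[OF exV[OF that]])
    define blk where "blk i = (SOME V. V \<in> pi_co \<chi> \<omega> n \<and> i \<in> V)" for i
    have blk: "blk i = V" if "V \<in> pi_co \<chi> \<omega> n" "i \<in> V" for V i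
    proof -
      have "blk i \<in> pi_co \<chi> \<omega> n \<and> i \<in> blk i" unfolding blk_def by (rule someI[of _ V]) (use that in simp)
      then show ?thesis using pi_co_disj that by blast
    qed
    define t where "t i = (if i \<in> M x then tV (blk i) i else 0)" for i
    have tsupp: "\<forall>i. i \<notin> M x \<longrightarrow> t i = 0" by (simp add: t_def)
    define xt where "xt = shiftc x t"
    have cxt: "cfg xt" unfolding xt_def by (rule cfg_shift[OF c tsupp])
    have ffeq: "ff xt = ff x" unfolding xt_def
      by (rule shift_inv[OF c less.hyps M_fin _ tsupp]) (use less.prems in auto)
    have zero: "\<Phi> (sub xt V) = 0" if V: "V \<in> B2" "V \<inter> M x \<noteq> {}" for V
    proof -
      have Vs: "V \<subseteq> {1..n}" "finite V" "V \<in> pi_co \<chi> \<omega> n" using V pi_co_sub[of V \<chi> \<omega> n] finite_subset by (auto simp: B2_def)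
      have "t i = tV V i" if "i \<in> V" for i
      proof (cases "i \<in> M x")
        case True then show ?thesis using blk[OF Vs(3) that] by (simp add: t_def)
      next
        case False then show ?thesis using tV[OF V] by (simp add: t_def)
      qed
      then have "sub xt V = wd \<omega> \<chi> (shiftc x (tV V)) (sorted_list_of_set V)"
        unfolding sub_def xt_def using Vs by (intro wd_cong) (simp add: shiftc_def)
      then show ?thesis using tV[OF V] by simp
    qed
    have units: "xt i = (1, 0)" if "V \<in> B2" "V \<inter> M x = {}" "i \<in> V" for V i
    proof -
      have "i \<notin> M x" using that by blast
      then show ?thesis using unitsx[OF that(1,3)] tsupp by (simp add: xt_def shiftc_def)
    qed
    have w0: "\<Phi> (word xt) = 0" by (rule retag_zero[OF cxt V0B V0M zero units])
    have p0: "(\<Prod>V\<in>B2. \<Phi> (sub xt V)) = 0" by (rule prod_zero_mem[where g="\<lambda>V. \<Phi> (sub xt V)", OF finB2 V0B zero[OF V0B V0M]])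
    have "ff xt = 0" unfolding ff_def using w0 p0 by simp
    then show ?thesis using ffeq by simp
  qed
qed

end

context bm
begin

definition "x0 = (\<lambda>j. (0::complex, a j))"

lemma cfg_x0: "cfg x0"
proof -
  have "a j \<in> A 2 (\<chi> j)" if "j \<in> {1..n}" "\<omega> j = 2" for j
    using aA[OF that(1)] that(2) by simp
  then show ?thesis unfolding cfg_def x0_def by simp
qed

lemma sub_x0: assumes V: "V \<subseteq> {1..n}" "V \<noteq> {}" shows "\<Phi> (sub x0 V) = \<phi> (aprod a V)"
proof -
  have fin: "finite V" using V finite_subset by blast
  have ne: "sub x0 V \<noteq> []" using fin V(2) by (simp add: sub_def wd_def)
  have nu: "nonunit_word (sub x0 V)" by (auto simp: nonunit_word_def sub_def wd_def x0_def)
  have "sub x0 V \<noteq> [] \<and> valid_word {1, 2} A (sub x0 V) \<and> nonunit_word (sub x0 V)"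
    using ne valid_sub[OF cfg_x0 V(1)] nu by simp
  then have "\<Phi> (sub x0 V) = phi_word \<phi> (sub x0 V)" using PW by simp
  also have "map (\<lambda>l. snd (snd (snd l))) (sub x0 V) = map a (sorted_list_of_set V)"
    by (simp add: sub_def wd_def x0_def)
  then have "phi_word \<phi> (sub x0 V) = \<phi> (aprod a V)" by (simp add: phi_word_def aprod_def)
  finally show ?thesis .
qed

lemma final_eq: "\<phi> (aprod a {1..n}) = phiprod \<phi> a W1 * (\<Prod>V\<in>B2. \<phi> (aprod a V))"
proof -
  have z: "ff x0 = 0" by (rule ff_zero[OF cfg_x0])
  have e1: "\<Phi> (word x0) = \<phi> (aprod a {1..n})" unfolding word_sub using n1 by (intro sub_x0) auto
  have e2: "\<Phi> (sub x0 W1) = phiprod \<phi> a W1"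
  proof (cases "W1 = {}")
    case True
    then have "sub x0 W1 = []" by (simp add: sub_def wd_def)
    then show ?thesis using True wPhi by (simp add: phiprod_def wfun_def)
  next
    case False
    have "W1 \<subseteq> {1..n}" by (auto simp: W1_def)
    then show ?thesis using sub_x0[of W1] False by (simp add: phiprod_def)
  qed
  have e3: "(\<Prod>V\<in>B2. \<Phi> (sub x0 V)) = (\<Prod>V\<in>B2. \<phi> (aprod a V))"
  proof (rule prod.cong)
    fix V assume "V \<in> B2"
    then have "V \<in> pi_co \<chi> \<omega> n" by (simp add: B2_def)
    then have "V \<subseteq> {1..n} \<and> V \<noteq> {}" by (rule pi_co_sub)
    then show "\<Phi> (sub x0 V) = \<phi> (aprod a V)" using sub_x0 by simp
  qed simp
  show ?thesis using z e1 e2 e3 unfolding ff_def by simp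
qed

end



theorem lemma2p5:
  fixes smul :: "complex \<Rightarrow> 'a::ring \<Rightarrow> 'a"
    and \<phi> :: "'a \<Rightarrow> complex"
    and A :: "nat \<Rightarrow> side \<Rightarrow> 'a set"
    and n :: nat and \<chi> :: "nat \<Rightarrow> side" and \<omega> :: "nat \<Rightarrow> nat" and a :: "nat \<Rightarrow> 'a"
  assumes "nc_space smul \<phi>"
    and "\<And>k s. k \<in> {1, 2} \<Longrightarrow> subalgebra smul (A k s)"
    and "bimonotone_indep smul \<phi> A"
    and "n \<ge> 1"
    and "\<And>j. j \<in> {1..n} \<Longrightarrow> \<omega> j \<in> {1, 2}"
    and "\<And>j. j \<in> {1..n} \<Longrightarrow> a j \<in> A (\<omega> j) (\<chi> j)"
  shows "\<phi> (aprod a {1..n}) =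
           phiprod \<phi> a {j \<in> {1..n}. \<omega> j = 1} *
           (\<Prod>V\<in>{V \<in> pi_co \<chi> \<omega> n. \<forall>j\<in>V. \<omega> j = 2}. \<phi> (aprod a V))"
proof -
  have ex: "\<exists>\<Phi> \<Psi> \<Phi>1 \<Delta>1 \<Phi>2.
        wfun {1} A smul \<Phi>1 \<and> wfun {1} A smul \<Delta>1 \<and> wfun {2} A smul \<Phi>2 \<and>
        (\<forall>w. w \<noteq> [] \<and> valid_word {1} A w \<and> nonunit_word w
             \<longrightarrow> \<Phi>1 w = phi_word \<phi> w \<and> \<Delta>1 w = 0) \<and>
        (\<forall>w. w \<noteq> [] \<and> valid_word {2} A w \<and> nonunit_word w \<longrightarrow> \<Phi>2 w = phi_word \<phi> w) \<and>
        c_bifree {1, 2} A smul \<Phi> \<Psi>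
          (\<lambda>k. if k = 1 then \<Phi>1 else \<Phi>2) (\<lambda>k. if k = 1 then \<Delta>1 else \<Phi>2) \<and>
        (\<forall>w. w \<noteq> [] \<and> valid_word {1, 2} A w \<and> nonunit_word w \<longrightarrow> \<Phi> w = phi_word \<phi> w)"
    using assms(3) unfolding bimonotone_indep_def .
  then obtain \<Phi> \<Psi> \<Phi>1 \<Delta>1 \<Phi>2 where H:
        "wfun {1} A smul \<Phi>1 \<and> wfun {1} A smul \<Delta>1 \<and> wfun {2} A smul \<Phi>2 \<and>
        (\<forall>w. w \<noteq> [] \<and> valid_word {1} A w \<and> nonunit_word w
             \<longrightarrow> \<Phi>1 w = phi_word \<phi> w \<and> \<Delta>1 w = 0) \<and>
        (\<forall>w. w \<noteq> [] \<and> valid_word {2} A w \<and> nonunit_word w \<longrightarrow> \<Phi>2 w = phi_word \<phi> w) \<and>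
        c_bifree {1, 2} A smul \<Phi> \<Psi>
          (\<lambda>k. if k = 1 then \<Phi>1 else \<Phi>2) (\<lambda>k. if k = 1 then \<Delta>1 else \<Phi>2) \<and>
        (\<forall>w. w \<noteq> [] \<and> valid_word {1, 2} A w \<and> nonunit_word w \<longrightarrow> \<Phi> w = phi_word \<phi> w)"
    by (elim exE)
  note h2 = H[THEN conjunct2, THEN conjunct2, THEN conjunct2, THEN conjunct1]
  note h4 = H[THEN conjunct2, THEN conjunct2, THEN conjunct2, THEN conjunct2, THEN conjunct2, THEN conjunct1]
  note h5 = H[THEN conjunct2, THEN conjunct2, THEN conjunct2, THEN conjunct2, THEN conjunct2, THEN conjunct2]
  have cal: "calg smul" using assms(1) by (simp add: nc_space_def)
  interpret bm smul \<phi> A n \<chi> \<omega> a \<Phi> \<Psi> \<Phi>1 \<Delta>1 \<Phi>2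
    by (rule bm.intro[OF cal assms(2) assms(4) assms(5) assms(6) h2 h4 h5])
  show ?thesis using final_eq unfolding W1_def B2_def .
qed

end
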